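(* Fix $d\ge1$ and let $y_1,y_2,\dots$ and $\beta$ be indeterminates. For every partition $\lambda$ of $n$ with $\ell(\lambda)\le d$ (set $\lambda_i=0$ for $i>\ell(\lambda)$), $$\sum_{T\in\operatorname{SIT}(\lambda)}\prod_{k=1}^{m(T)}\left(\left[\prod_{i=1}^d\frac{1+\beta\,y_{\nu_i(T_{<k})+d-i+1}}{1+\beta\,y_{\lambda_i+d-i+1}}\right]-1\right)^{-1}=\frac{1}{\beta^n}\prod_{i=1}^d\big(1+\beta\,y_{\lambda_i+d-i+1}\big)^{\lambda_i}\prod_{(i,j)\in\lambda}\frac{1}{y_{d+j-\lambda'_j}-y_{\lambda_i+d-i+1}}.$$
   Context: Partitions are identified with Young diagrams $\{(i,j):1\le j\le\lambda_i\}$ (English convention); $\lambda'$ is the conjugate partition. A standard increasing tableau of shape $\lambda$ is a filling $T$ of the cells of $\lambda$ by positive integers, strictly increasing along rows and down columns, whose set of entries is $\{1,\dots,m\}$ for some $m=m(T)$; $\operatorname{SIT}(\lambda)$ is their set. For $k\ge1$, $\nu(T_{<k})$ is the partition formed by the cells with entry $<k$, and $\nu_i(T_{<k})$ its $i$-th part (0 beyond its length). The identity is one of rational functions in $\beta,y_1,y_2,\dots$. *)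

theory Defs
  imports Main
begin

definition is_partition :: "nat list \<Rightarrow> bool" where
  "is_partition lam \<longleftrightarrow> sorted_wrt (\<ge>) lam \<and> 0 \<notin> set lam"

definition part :: "nat list \<Rightarrow> nat \<Rightarrow> nat" where
  "part lam i = (if 1 \<le> i \<and> i \<le> length lam then lam ! (i - 1) else 0)"

definition young :: "nat list \<Rightarrow> (nat \<times> nat) set" where
  "young lam = {(i, j). 1 \<le> i \<and> 1 \<le> j \<and> j \<le> part lam i}"

definition conj_part :: "nat list \<Rightarrow> nat \<Rightarrow> nat" where
  "conj_part lam j = card {i \<in> {1..length lam}. j \<le> part lam i}"

definition sit :: "nat list \<Rightarrow> ((nat \<times> nat) \<Rightarrow> nat) set" where
  "sit lam = {T. (\<forall>c. c \<notin> young lam \<longrightarrow> T c = 0)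
     \<and> (\<forall>i j j'. (i, j) \<in> young lam \<and> (i, j') \<in> young lam \<and> j < j' \<longrightarrow> T (i, j) < T (i, j'))
     \<and> (\<forall>i i' j. (i, j) \<in> young lam \<and> (i', j) \<in> young lam \<and> i < i' \<longrightarrow> T (i, j) < T (i', j))
     \<and> (\<exists>m. T ` young lam = {1..m})}"

text \<open>m(T): the largest entry (the entry set is {1..m(T)}).\<close>
definition sit_max :: "nat list \<Rightarrow> ((nat \<times> nat) \<Rightarrow> nat) \<Rightarrow> nat" where
  "sit_max lam T = card (T ` young lam)"

text \<open>nu_i(T_{<k}): the i-th part of the partition formed by cells with entry < k.\<close>
definition nu :: "nat list \<Rightarrow> ((nat \<times> nat) \<Rightarrow> nat) \<Rightarrow> nat \<Rightarrow> nat \<Rightarrow> nat" where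
  "nu lam T k i = card {j. (i, j) \<in> young lam \<and> T (i, j) < k}"

end

theory Submission
  imports Defs "HOL-Computational_Algebra.Polynomial" "Jordan_Normal_Form.Determinant" "Jordan_Normal_Form.Column_Operations"
begin


definition rf :: "('a::field \<Rightarrow> 'a) \<Rightarrow> bool" where
  "rf f \<longleftrightarrow> (\<exists>N D. poly D 0 \<noteq> 0 \<and> (\<forall>x. poly D x \<noteq> 0 \<longrightarrow> f x = poly N x / poly D x))"

lemma rf_poly: "rf (\<lambda>x. poly p x)"
  unfolding rf_def by (rule exI[of _ p], rule exI[of _ 1]) auto

lemma rf_const: "rf (\<lambda>x. c)"
  using rf_poly[of "[:c:]"] by simp

lemma rf_lin: "rf (\<lambda>x. c + x * e)"
  using rf_poly[of "[:c, e:]"] by (simp add: algebra_simps)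

lemma rf_add: assumes "rf f" "rf g" shows "rf (\<lambda>x. f x + g x)"
proof -
  obtain N1 D1 where 1: "poly D1 0 \<noteq> 0" "\<And>x. poly D1 x \<noteq> 0 \<Longrightarrow> f x = poly N1 x / poly D1 x"
    using assms(1) unfolding rf_def by blast
  obtain N2 D2 where 2: "poly D2 0 \<noteq> 0" "\<And>x. poly D2 x \<noteq> 0 \<Longrightarrow> g x = poly N2 x / poly D2 x"
    using assms(2) unfolding rf_def by blast
  show ?thesis unfolding rf_def
    apply (rule exI[of _ "N1 * D2 + N2 * D1"], rule exI[of _ "D1 * D2"])
    using 1 2 by (auto simp: field_simps)
qed

lemma rf_mult: assumes "rf f" "rf g" shows "rf (\<lambda>x. f x * g x)"
proof -
  obtain N1 D1 where 1: "poly D1 0 \<noteq> 0" "\<And>x. poly D1 x \<noteq> 0 \<Longrightarrow> f x = poly N1 x / poly D1 x"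
    using assms(1) unfolding rf_def by blast
  obtain N2 D2 where 2: "poly D2 0 \<noteq> 0" "\<And>x. poly D2 x \<noteq> 0 \<Longrightarrow> g x = poly N2 x / poly D2 x"
    using assms(2) unfolding rf_def by blast
  show ?thesis unfolding rf_def
    apply (rule exI[of _ "N1 * N2"], rule exI[of _ "D1 * D2"])
    using 1 2 by (auto simp: field_simps)
qed

lemma rf_minus: assumes "rf f" "rf g" shows "rf (\<lambda>x. f x - g x)"
proof -
  have "rf (\<lambda>x. (-1) * g x)" by (rule rf_mult[OF rf_const assms(2)])
  from rf_add[OF assms(1) this] show ?thesis by simp
qed

lemma rf_inverse: assumes "rf f" "f 0 \<noteq> 0" shows "rf (\<lambda>x. 1 / f x)"
proof -
  obtain N1 D1 where 1: "poly D1 0 \<noteq> 0" "\<And>x. poly D1 x \<noteq> 0 \<Longrightarrow> f x = poly N1 x / poly D1 x"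
    using assms(1) unfolding rf_def by blast
  have "poly N1 0 \<noteq> 0" using 1 assms(2) by auto
  show ?thesis unfolding rf_def
    apply (rule exI[of _ "D1 * D1"], rule exI[of _ "N1 * D1"])
    using 1 \<open>poly N1 0 \<noteq> 0\<close> by auto
qed

lemma rf_divide: assumes "rf f" "rf g" "g 0 \<noteq> 0" shows "rf (\<lambda>x. f x / g x)"
  using rf_mult[OF assms(1) rf_inverse[OF assms(2,3)]] by (simp add: divide_inverse)

lemma rf_sum: "(\<And>i. i \<in> I \<Longrightarrow> rf (f i)) \<Longrightarrow> rf (\<lambda>x. \<Sum>i\<in>I. f i x)"
proof (induction I rule: infinite_finite_induct)
  case (infinite A) then show ?case by (simp add: rf_const)
next
  case empty then show ?case by (simp add: rf_const)
next
  case (insert a A) then show ?case by (simp add: rf_add)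
qed

lemma rf_prod: "(\<And>i. i \<in> I \<Longrightarrow> rf (f i)) \<Longrightarrow> rf (\<lambda>x. \<Prod>i\<in>I. f i x)"
proof (induction I rule: infinite_finite_induct)
  case (infinite A) then show ?case by (simp add: rf_const)
next
  case empty then show ?case by (simp add: rf_const)
next
  case (insert a A) then show ?case by (simp add: rf_mult)
qed

lemma rf_power: "rf f \<Longrightarrow> rf (\<lambda>x. f x ^ n)"
  by (induction n) (auto simp: rf_const rf_mult)

lemma rf_zeros_finite: assumes "rf f" "f 0 \<noteq> 0" shows "finite {x. f x = 0}"
proof -
  obtain N1 D1 where 1: "poly D1 0 \<noteq> 0" "\<And>x. poly D1 x \<noteq> 0 \<Longrightarrow> f x = poly N1 x / poly D1 x"
    using assms(1) unfolding rf_def by blast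
  have "poly N1 0 \<noteq> 0" using 1 assms(2) by auto
  then have "N1 \<noteq> 0" "D1 \<noteq> 0" using 1 by auto
  have "{x. f x = 0} \<subseteq> {x. poly N1 x = 0} \<union> {x. poly D1 x = 0}"
    using 1 by auto
  moreover have "finite ({x. poly N1 x = 0} \<union> {x. poly D1 x = 0})"
    using poly_roots_finite[OF \<open>N1 \<noteq> 0\<close>] poly_roots_finite[OF \<open>D1 \<noteq> 0\<close>] by auto
  ultimately show ?thesis by (rule finite_subset)
qed

lemma rf_eq:
  fixes f g :: "'a::field_char_0 \<Rightarrow> 'a"
  assumes "rf f" "rf g" "finite {x. f x \<noteq> g x}" shows "f 0 = g 0"
proof -
  obtain N1 D1 where 1: "poly D1 0 \<noteq> 0" "\<And>x. poly D1 x \<noteq> 0 \<Longrightarrow> f x = poly N1 x / poly D1 x"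
    using assms(1) unfolding rf_def by blast
  obtain N2 D2 where 2: "poly D2 0 \<noteq> 0" "\<And>x. poly D2 x \<noteq> 0 \<Longrightarrow> g x = poly N2 x / poly D2 x"
    using assms(2) unfolding rf_def by blast
  have "D1 \<noteq> 0" "D2 \<noteq> 0" using 1 2 by auto
  let ?P = "N1 * D2 - N2 * D1"
  have sub: "- {x. poly ?P x = 0} \<subseteq> {x. f x \<noteq> g x} \<union> {x. poly D1 x = 0} \<union> {x. poly D2 x = 0}"
  proof
    fix x assume "x \<in> - {x. poly ?P x = 0}"
    then have P: "poly N1 x * poly D2 x \<noteq> poly N2 x * poly D1 x" by simp
    show "x \<in> {x. f x \<noteq> g x} \<union> {x. poly D1 x = 0} \<union> {x. poly D2 x = 0}"
    proof (cases "poly D1 x = 0 \<or> poly D2 x = 0")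
      case False
      then have fx: "f x = poly N1 x / poly D1 x" and gx: "g x = poly N2 x / poly D2 x" using 1 2 by auto
      have "f x \<noteq> g x"
      proof
        assume "f x = g x"
        then have "poly N1 x / poly D1 x = poly N2 x / poly D2 x" using fx gx by simp
        then have "poly N1 x * poly D2 x = poly N2 x * poly D1 x" using False
          by (simp add: divide_eq_eq eq_divide_eq)
        then show False using P by simp
      qed
      then show ?thesis by simp
    qed auto
  qed
  have "?P = 0"
  proof (rule ccontr)
    assume "?P \<noteq> 0"
    then have "finite {x. poly ?P x = 0}" by (rule poly_roots_finite)
    moreover have "finite (- {x. poly ?P x = 0})"
      using finite_subset[OF sub] assms(3) poly_roots_finite[OF \<open>D1 \<noteq> 0\<close>]
        poly_roots_finite[OF \<open>D2 \<noteq> 0\<close>] by auto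
    ultimately have "finite (UNIV :: 'a set)"
      by (metis Compl_partition finite_UnI)
    then show False using infinite_UNIV_char_0 by blast
  qed
  then have "poly N1 0 * poly D2 0 = poly N2 0 * poly D1 0"
    by (metis eq_iff_diff_eq_0 poly_diff poly_mult poly_0)
  moreover have "f 0 = poly N1 0 / poly D1 0" "g 0 = poly N2 0 / poly D2 0" using 1 2 by auto
  ultimately show ?thesis using 1(1) 2(1) by (simp add: frac_eq_eq)
qed




definition psi :: "(nat \<Rightarrow> 'a::field) \<Rightarrow> 'a \<Rightarrow> nat \<Rightarrow> 'a" where
  "psi A a x = (\<Prod>t\<in>{1..<x}. A t / a - 1)"

definition ent :: "(nat \<Rightarrow> 'a::field) \<Rightarrow> (nat \<Rightarrow> 'a) \<Rightarrow> nat \<Rightarrow> nat \<Rightarrow> nat \<Rightarrow> nat \<Rightarrow> 'a" where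
  "ent A av d r c x = av r ^ (d - 1 - c) * psi A (av r) x"

definition DM :: "(nat \<Rightarrow> 'a::field) \<Rightarrow> (nat \<Rightarrow> 'a) \<Rightarrow> nat \<Rightarrow> (nat \<Rightarrow> nat) \<Rightarrow> 'a mat" where
  "DM A av d p = mat d d (\<lambda>(r,c). ent A av d r c (p c))"

definition MX :: "(nat \<Rightarrow> 'a::field) \<Rightarrow> (nat \<Rightarrow> 'a) \<Rightarrow> nat \<Rightarrow> nat set \<Rightarrow> (nat \<Rightarrow> nat) \<Rightarrow> 'a mat" where
  "MX A av d X p = mat d d (\<lambda>(r,c). if c \<in> X then ent A av d r c (p c) + ent A av d r c (Suc (p c))
      else ent A av d r c (p c))"

definition shiftp :: "(nat \<Rightarrow> nat) \<Rightarrow> nat set \<Rightarrow> nat \<Rightarrow> nat" where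
  "shiftp p S c = p c + (if c \<in> S then 1 else 0)"

lemma prod_if_add:
  fixes F G :: "nat \<Rightarrow> 'a::comm_semiring_1"
  assumes "finite I" "X \<subseteq> I"
  shows "(\<Prod>j\<in>I. if j \<in> X then F j + G j else F j) = (\<Sum>S\<in>Pow X. \<Prod>j\<in>I. if j \<in> S then G j else F j)"
proof -
  have fX: "finite X" using assms finite_subset by blast
  have "(\<Prod>j\<in>I. if j \<in> X then F j + G j else F j) = (\<Prod>j\<in>X. G j + F j) * (\<Prod>j\<in>I - X. F j)"
  proof -
    have "(\<Prod>j\<in>I. if j \<in> X then F j + G j else F j) = (\<Prod>j\<in>I - X. if j \<in> X then F j + G j else F j) * (\<Prod>j\<in>X. if j \<in> X then F j + G j else F j)"
      by (rule prod.subset_diff[OF assms(2) assms(1)])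
    also have "(\<Prod>j\<in>X. if j \<in> X then F j + G j else F j) = (\<Prod>j\<in>X. G j + F j)"
      by (rule prod.cong) (auto simp: add.commute)
    also have "(\<Prod>j\<in>I - X. if j \<in> X then F j + G j else F j) = (\<Prod>j\<in>I - X. F j)"
      by (rule prod.cong) auto
    finally show ?thesis by (simp add: mult.commute)
  qed
  also have "\<dots> = (\<Sum>S\<in>Pow X. (\<Prod>j\<in>S. G j) * (\<Prod>j\<in>X - S. F j)) * (\<Prod>j\<in>I - X. F j)"
    using prod_add[OF fX, of G F] by simp
  also have "\<dots> = (\<Sum>S\<in>Pow X. (\<Prod>j\<in>S. G j) * (\<Prod>j\<in>X - S. F j) * (\<Prod>j\<in>I - X. F j))"
    by (simp add: sum_distrib_right)
  also have "\<dots> = (\<Sum>S\<in>Pow X. \<Prod>j\<in>I. if j \<in> S then G j else F j)"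
  proof (rule sum.cong[OF refl])
    fix S assume "S \<in> Pow X"
    then have SX: "S \<subseteq> X" by auto
    have fS: "finite S" using fX SX finite_subset by blast
    have "(\<Prod>j\<in>I. if j \<in> S then G j else F j) = (\<Prod>j\<in>I - S. if j \<in> S then G j else F j) * (\<Prod>j\<in>S. if j \<in> S then G j else F j)"
      by (rule prod.subset_diff) (use SX assms in auto)
    also have "\<dots> = (\<Prod>j\<in>S. if j \<in> S then G j else F j) * (\<Prod>j\<in>I - S. if j \<in> S then G j else F j)"
      by (simp add: mult.commute)
    also have "\<dots> = (\<Prod>j\<in>S. G j) * (\<Prod>j\<in>I - S. F j)" by simp
    also have "(\<Prod>j\<in>I - S. F j) = (\<Prod>j\<in>X - S. F j) * (\<Prod>j\<in>I - X. F j)"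
    proof -
      have "I - S = (X - S) \<union> (I - X)" using SX assms by auto
      moreover have "(X - S) \<inter> (I - X) = {}" by auto
      ultimately show ?thesis using prod.union_disjoint[of "X - S" "I - X" F] fX assms by auto
    qed
    finally show "(\<Prod>j\<in>S. G j) * (\<Prod>j\<in>X - S. F j) * (\<Prod>j\<in>I - X. F j) = (\<Prod>j\<in>I. if j \<in> S then G j else F j)"
      by (simp add: mult.assoc)
  qed
  finally show ?thesis .
qed

lemma DM_carrier[simp]: "DM A av d p \<in> carrier_mat d d" unfolding DM_def by simp
lemma MX_carrier[simp]: "MX A av d X p \<in> carrier_mat d d" unfolding MX_def by simp

lemma det_MX:
  assumes "X \<subseteq> {0..<d}"
  shows "det (MX A av d X p) = (\<Sum>S\<in>Pow X. det (DM A av d (shiftp p S)))"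
proof -
  let ?P = "{\<sigma>. \<sigma> permutes {0..<d}}"
  have "det (MX A av d X p) = (\<Sum>\<sigma>\<in>?P. signof \<sigma> * (\<Prod>j<d. MX A av d X p $$ (\<sigma> j, j)))"
    by (rule det_col[OF MX_carrier])
  also have "\<dots> = (\<Sum>\<sigma>\<in>?P. signof \<sigma> * (\<Sum>S\<in>Pow X. \<Prod>j<d. ent A av d (\<sigma> j) j (shiftp p S j)))"
  proof (rule sum.cong[OF refl])
    fix \<sigma> assume "\<sigma> \<in> ?P"
    then have s: "\<And>j. j < d \<Longrightarrow> \<sigma> j < d" using permutes_in_image by fastforce
    have "(\<Prod>j<d. MX A av d X p $$ (\<sigma> j, j)) = (\<Prod>j<d. if j \<in> X then ent A av d (\<sigma> j) j (p j) + ent A av d (\<sigma> j) j (Suc (p j)) else ent A av d (\<sigma> j) j (p j))"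
      by (rule prod.cong[OF refl]) (auto simp: MX_def s)
    also have "\<dots> = (\<Sum>S\<in>Pow X. \<Prod>j<d. if j \<in> S then ent A av d (\<sigma> j) j (Suc (p j)) else ent A av d (\<sigma> j) j (p j))"
      by (rule prod_if_add) (use assms in auto)
    also have "\<dots> = (\<Sum>S\<in>Pow X. \<Prod>j<d. ent A av d (\<sigma> j) j (shiftp p S j))"
      by (intro sum.cong prod.cong refl) (auto simp: shiftp_def)
    finally show "signof \<sigma> * (\<Prod>j<d. MX A av d X p $$ (\<sigma> j, j)) = signof \<sigma> * (\<Sum>S\<in>Pow X. \<Prod>j<d. ent A av d (\<sigma> j) j (shiftp p S j))"
      by simp
  qed
  also have "\<dots> = (\<Sum>S\<in>Pow X. \<Sum>\<sigma>\<in>?P. signof \<sigma> * (\<Prod>j<d. ent A av d (\<sigma> j) j (shiftp p S j)))"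
    by (simp add: sum_distrib_left sum.swap[of _ ?P])
  also have "\<dots> = (\<Sum>S\<in>Pow X. det (DM A av d (shiftp p S)))"
  proof (rule sum.cong[OF refl])
    fix S
    show "(\<Sum>\<sigma>\<in>?P. signof \<sigma> * (\<Prod>j<d. ent A av d (\<sigma> j) j (shiftp p S j))) = det (DM A av d (shiftp p S))"
      unfolding det_col[OF DM_carrier]
    proof (rule sum.cong[OF refl])
      fix \<sigma> assume "\<sigma> \<in> ?P"
      then have s: "\<And>j. j < d \<Longrightarrow> \<sigma> j < d" using permutes_in_image by fastforce
      show "signof \<sigma> * (\<Prod>j<d. ent A av d (\<sigma> j) j (shiftp p S j)) = signof \<sigma> * (\<Prod>j<d. DM A av d (shiftp p S) $$ (\<sigma> j, j))"
        by (auto simp: DM_def s intro!: prod.cong)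
    qed
  qed
  finally show ?thesis .
qed

lemma psi_Suc: "1 \<le> x \<Longrightarrow> psi A a (Suc x) = psi A a x * (A x / a - 1)"
proof -
  assume "1 \<le> x"
  then have "{1..<Suc x} = insert x {1..<x}" by auto
  then show ?thesis unfolding psi_def by (simp add: mult.commute)
qed

lemma ent_step:
  assumes "1 \<le> x" "av r \<noteq> 0"
  shows "ent A av d r c x + ent A av d r c (Suc x) = A x / av r * ent A av d r c x"
  using assms unfolding ent_def psi_Suc[OF assms(1)] by (simp add: field_simps)

lemma det_MX_all:
  assumes "\<And>c. c < d \<Longrightarrow> 1 \<le> p c" "\<And>r. r < d \<Longrightarrow> av r \<noteq> 0"
  shows "det (MX A av d {0..<d} p) = (\<Prod>c<d. A (p c)) / (\<Prod>r<d. av r) * det (DM A av d p)"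
proof -
  let ?P = "{\<sigma>. \<sigma> permutes {0..<d}}"
  have "det (MX A av d {0..<d} p) = (\<Sum>\<sigma>\<in>?P. signof \<sigma> * (\<Prod>j<d. MX A av d {0..<d} p $$ (\<sigma> j, j)))"
    by (rule det_col[OF MX_carrier])
  also have "\<dots> = (\<Sum>\<sigma>\<in>?P. (\<Prod>c<d. A (p c)) / (\<Prod>r<d. av r) * (signof \<sigma> * (\<Prod>j<d. DM A av d p $$ (\<sigma> j, j))))"
  proof (rule sum.cong[OF refl])
    fix \<sigma> assume sp: "\<sigma> \<in> ?P"
    then have s: "\<And>j. j < d \<Longrightarrow> \<sigma> j < d" using permutes_in_image by fastforce
    have "(\<Prod>j<d. MX A av d {0..<d} p $$ (\<sigma> j, j)) = (\<Prod>j<d. A (p j) / av (\<sigma> j) * DM A av d p $$ (\<sigma> j, j))"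
    proof (rule prod.cong[OF refl])
      fix j assume "j \<in> {..<d}"
      then have j: "j < d" by simp
      show "MX A av d {0..<d} p $$ (\<sigma> j, j) = A (p j) / av (\<sigma> j) * DM A av d p $$ (\<sigma> j, j)"
        using ent_step[of "p j" av "\<sigma> j" A d j] assms(1)[OF j] assms(2)[OF s[OF j]]
        by (simp add: MX_def DM_def s j)
    qed
    also have "\<dots> = (\<Prod>j<d. A (p j)) / (\<Prod>j<d. av (\<sigma> j)) * (\<Prod>j<d. DM A av d p $$ (\<sigma> j, j))"
      by (simp add: prod.distrib prod_dividef)
    also have "(\<Prod>j<d. av (\<sigma> j)) = (\<Prod>r<d. av r)"
    proof -
      have "\<sigma> permutes {..<d}" using sp by (simp add: atLeast0LessThan)
      then show ?thesis by (rule prod.permute[symmetric, where g = av, simplified comp_def])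
    qed
    finally show "signof \<sigma> * (\<Prod>j<d. MX A av d {0..<d} p $$ (\<sigma> j, j)) = (\<Prod>c<d. A (p c)) / (\<Prod>r<d. av r) * (signof \<sigma> * (\<Prod>j<d. DM A av d p $$ (\<sigma> j, j)))"
      by simp
  qed
  also have "\<dots> = (\<Prod>c<d. A (p c)) / (\<Prod>r<d. av r) * det (DM A av d p)"
    unfolding det_col[OF DM_carrier] by (simp add: sum_distrib_left)
  finally show ?thesis .
qed

lemma MX_insert_blocked:
  assumes c: "1 \<le> c" "c < d" and "c \<notin> X" "c - 1 \<in> X" and blk: "Suc (p c) = p (c - 1)"
    and AP: "A (p (c - 1)) \<noteq> 0" and P1: "1 \<le> p (c - 1)" and av: "\<And>r. r < d \<Longrightarrow> av r \<noteq> 0"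
  shows "det (MX A av d (insert c X) p) = det (MX A av d X p)"
proof -
  let ?P = "p (c - 1)"
  have "MX A av d (insert c X) p = addcol (1 / A ?P) c (c - 1) (MX A av d X p)"
  proof (rule eq_matI)
    fix r j assume r: "r < dim_row (addcol (1 / A ?P) c (c - 1) (MX A av d X p))"
      and j: "j < dim_col (addcol (1 / A ?P) c (c - 1) (MX A av d X p))"
    then have rd: "r < d" and jd: "j < d" by (auto simp: MX_def mat_addcol_def)
    show "MX A av d (insert c X) p $$ (r, j) = addcol (1 / A ?P) c (c - 1) (MX A av d X p) $$ (r, j)"
    proof (cases "j = c")
      case True
      have e: "d - 1 - (c - 1) = Suc (d - 1 - c)" using c by simp
      have "ent A av d r (c - 1) ?P + ent A av d r (c - 1) (Suc ?P) = A ?P / av r * ent A av d r (c - 1) ?P"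
        using ent_step[of ?P av r A d "c - 1"] P1 av[OF rd] by simp
      then have "1 / A ?P * (ent A av d r (c - 1) ?P + ent A av d r (c - 1) (Suc ?P)) = ent A av d r c (Suc (p c))"
        using AP av[OF rd] unfolding blk ent_def e by (simp add: field_simps)
      then show ?thesis using True rd c assms(3,4)
        by (simp add: MX_def mat_addcol_def)
    next
      case False
      then show ?thesis using rd jd by (simp add: MX_def mat_addcol_def)
    qed
  qed (auto simp: MX_def mat_addcol_def)
  moreover have "det (addcol (1 / A ?P) c (c - 1) (MX A av d X p)) = det (MX A av d X p)"
    by (rule det_addcol[where n = d]) (use c in auto)
  ultimately show ?thesis by simp
qed

lemma det_MX_blocked:
  assumes p1: "\<And>c. c < d \<Longrightarrow> 1 \<le> p c" and Ap: "\<And>c. c < d \<Longrightarrow> A (p c) \<noteq> 0"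
    and av: "\<And>r. r < d \<Longrightarrow> av r \<noteq> 0"
  shows "det (MX A av d {0..<d} p) = det (MX A av d ({0..<d} - {c. 1 \<le> c \<and> c < d \<and> Suc (p c) = p (c - 1)}) p)"
proof -
  define B where "B = {c. 1 \<le> c \<and> c < d \<and> Suc (p c) = p (c - 1)}"
  define U where "U = {0..<d} - B"
  have "k \<le> d \<Longrightarrow> det (MX A av d (U \<union> {c\<in>B. c < k}) p) = det (MX A av d U p)" for k
  proof (induction k)
    case 0 then show ?case by simp
  next
    case (Suc k)
    show ?case
    proof (cases "k \<in> B")
      case True
      then have k: "1 \<le> k" "k < d" "Suc (p k) = p (k - 1)" unfolding B_def by auto
      have eq: "U \<union> {c\<in>B. c < Suc k} = insert k (U \<union> {c\<in>B. c < k})"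
        using True by auto
      have "k \<notin> U \<union> {c\<in>B. c < k}" using True unfolding U_def by auto
      moreover have "k - 1 \<in> U \<union> {c\<in>B. c < k}" using k unfolding U_def by auto
      ultimately have "det (MX A av d (insert k (U \<union> {c\<in>B. c < k})) p) = det (MX A av d (U \<union> {c\<in>B. c < k}) p)"
        using MX_insert_blocked[of k d "U \<union> {c\<in>B. c < k}" p A av] k Ap p1 av by auto
      then show ?thesis using Suc eq by simp
    next
      case False
      then have "U \<union> {c\<in>B. c < Suc k} = U \<union> {c\<in>B. c < k}" by (auto simp: less_Suc_eq)
      then show ?thesis using Suc by simp
    qed
  qed
  from this[of d] have "det (MX A av d (U \<union> {c\<in>B. c < d}) p) = det (MX A av d U p)" by simp
  moreover have "U \<union> {c\<in>B. c < d} = {0..<d}" unfolding U_def B_def by auto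
  ultimately show ?thesis unfolding U_def B_def by simp
qed

lemma strict_dec_le:
  fixes f :: "nat \<Rightarrow> nat"
  assumes "\<And>c. Suc c < d \<Longrightarrow> f (Suc c) < f c" "i \<le> j" "j < d"
  shows "f j \<le> f i"
  using assms(2,3)
proof (induction j)
  case 0 then show ?case by simp
next
  case (Suc j)
  then show ?case using assms(1)[of j] by (cases "i = Suc j") auto
qed

lemma psi_zero: "1 \<le> t \<Longrightarrow> t < x \<Longrightarrow> A t \<noteq> 0 \<Longrightarrow> psi A (A t) x = 0"
  unfolding psi_def by (rule prod_zero) auto

lemma det_DM_support:
  assumes av: "\<And>r. r < d \<Longrightarrow> av r = A (q r)" "\<And>r. r < d \<Longrightarrow> A (q r) \<noteq> 0"
    and q1: "\<And>r. r < d \<Longrightarrow> 1 \<le> q r"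
    and qdec: "\<And>c. Suc c < d \<Longrightarrow> q (Suc c) < q c"
    and pdec: "\<And>c. Suc c < d \<Longrightarrow> p (Suc c) < p c"
    and k: "k < d" "q k < p k"
  shows "det (DM A av d p) = 0"
proof -
  let ?P = "{\<sigma>. \<sigma> permutes {0..<d}}"
  have "det (DM A av d p) = (\<Sum>\<sigma>\<in>?P. signof \<sigma> * (\<Prod>j<d. DM A av d p $$ (\<sigma> j, j)))"
    by (rule det_col[OF DM_carrier])
  also have "\<dots> = 0"
  proof (rule sum.neutral, rule ballI)
    fix \<sigma> assume sp: "\<sigma> \<in> ?P"
    then have s: "\<And>j. j < d \<Longrightarrow> \<sigma> j < d" using permutes_in_image by fastforce
    have inj: "inj_on \<sigma> {0..k}" using sp permutes_inj_on by (metis mem_Collect_eq permutes_inj inj_on_subset subset_UNIV)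
    have "\<exists>j\<le>k. k \<le> \<sigma> j"
    proof (rule ccontr)
      assume "\<not> ?thesis"
      then have "\<sigma> ` {0..k} \<subseteq> {0..<k}" by force
      from card_inj_on_le[OF inj this] show False by simp
    qed
    then obtain j where j: "j \<le> k" "k \<le> \<sigma> j" by blast
    have jd: "j < d" using j k by simp
    have "q (\<sigma> j) \<le> q k" using strict_dec_le[of d q k "\<sigma> j"] qdec j(2) s[OF jd] by blast
    moreover have "p k \<le> p j" using strict_dec_le[of d p j k] pdec j(1) k(1) by blast
    ultimately have "q (\<sigma> j) < p j" using k by simp
    then have "DM A av d p $$ (\<sigma> j, j) = 0"
      using s[OF jd] jd av[OF s[OF jd]] q1[OF s[OF jd]] assms(2)[OF s[OF jd]]
      by (simp add: DM_def ent_def psi_zero)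
    then have "(\<Prod>j<d. DM A av d p $$ (\<sigma> j, j)) = 0"
      using jd by (intro prod_zero) auto
    then show "signof \<sigma> * (\<Prod>j<d. DM A av d p $$ (\<sigma> j, j)) = 0" by simp
  qed
  finally show ?thesis .
qed

lemma det_DM_diag:
  assumes av: "\<And>r. r < d \<Longrightarrow> av r = A (q r)" "\<And>r. r < d \<Longrightarrow> A (q r) \<noteq> 0"
    and q1: "\<And>r. r < d \<Longrightarrow> 1 \<le> q r"
    and qdec: "\<And>c. Suc c < d \<Longrightarrow> q (Suc c) < q c"
  shows "det (DM A av d q) = (\<Prod>r<d. ent A av d r r (q r))"
proof -
  have ut: "upper_triangular (DM A av d q)"
    unfolding upper_triangular_def
  proof (intro allI impI)
    fix i j assume i: "i < dim_row (DM A av d q)" and ji: "j < i"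
    then have id: "i < d" by (simp add: DM_def)
    have "q i < q j"
    proof -
      have "q i \<le> q (Suc j)" using strict_dec_le[of d q "Suc j" i] qdec ji id by simp
      moreover have "q (Suc j) < q j" using qdec[of j] ji id by simp
      ultimately show ?thesis by simp
    qed
    then show "DM A av d q $$ (i, j) = 0"
      using id ji av[OF id] q1[OF id] assms(2)[OF id] by (simp add: DM_def ent_def psi_zero)
  qed
  have "det (DM A av d q) = prod_list (diag_mat (DM A av d q))"
    by (rule det_upper_triangular[OF ut DM_carrier])
  also have "\<dots> = (\<Prod>r<d. ent A av d r r (q r))"
    unfolding diag_mat_def by (simp add: DM_def prod.list_conv_set_nth atLeast0LessThan)
  finally show ?thesis .
qed

lemma det_row_factor:
  "det (mat n n (\<lambda>(r,c). f r * g r c)) = (\<Prod>r<n. f r) * det (mat n n (\<lambda>(r,c). g r c))"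
proof -
  let ?P = "{\<sigma>. \<sigma> permutes {0..<n}}"
  have "det (mat n n (\<lambda>(r,c). f r * g r c)) = (\<Sum>\<sigma>\<in>?P. signof \<sigma> * (\<Prod>i = 0..<n. mat n n (\<lambda>(r,c). f r * g r c) $$ (i, \<sigma> i)))"
    by (rule det_def') simp
  also have "\<dots> = (\<Sum>\<sigma>\<in>?P. (\<Prod>r<n. f r) * (signof \<sigma> * (\<Prod>i = 0..<n. mat n n (\<lambda>(r,c). g r c) $$ (i, \<sigma> i))))"
  proof (rule sum.cong[OF refl])
    fix \<sigma> assume "\<sigma> \<in> ?P"
    then have s: "\<And>j. j < n \<Longrightarrow> \<sigma> j < n" using permutes_in_image by fastforce
    have "(\<Prod>i = 0..<n. mat n n (\<lambda>(r,c). f r * g r c) $$ (i, \<sigma> i)) = (\<Prod>i = 0..<n. f i * mat n n (\<lambda>(r,c). g r c) $$ (i, \<sigma> i))"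
      by (rule prod.cong) (auto simp: s)
    also have "\<dots> = (\<Prod>r<n. f r) * (\<Prod>i = 0..<n. mat n n (\<lambda>(r,c). g r c) $$ (i, \<sigma> i))"
      by (simp add: prod.distrib atLeast0LessThan)
    finally show "signof \<sigma> * (\<Prod>i = 0..<n. mat n n (\<lambda>(r,c). f r * g r c) $$ (i, \<sigma> i)) = (\<Prod>r<n. f r) * (signof \<sigma> * (\<Prod>i = 0..<n. mat n n (\<lambda>(r,c). g r c) $$ (i, \<sigma> i)))"
      by (simp add: ac_simps)
  qed
  also have "\<dots> = (\<Prod>r<n. f r) * det (mat n n (\<lambda>(r,c). g r c))"
    by (subst det_def'[of _ n]) (auto simp: sum_distrib_left)
  finally show ?thesis .
qed

lemma vandermonde_poly:
  fixes A a :: "nat \<Rightarrow> 'a::field"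
  shows "det (mat n n (\<lambda>(r,c). \<Prod>t\<in>{1..<n-c}. (A t - a r))) = (\<Prod>r'<n. \<Prod>r<r'. (a r' - a r))"
proof (induction n)
  case 0 then show ?case by (simp add: det_def)
next
  case (Suc m)
  define M where "M = mat (Suc m) (Suc m) (\<lambda>(r,c). \<Prod>t\<in>{1..<Suc m-c}. (A t - a r))"
  define U where "U = mat (Suc m) (Suc m) (\<lambda>(i,j). if i = j then 1 else if i = Suc j then - (A (m - j) - a m) else (0::'a))"
  define N where "N = mat (Suc m) (Suc m) (\<lambda>(r,c). if c = m then 1 else (a m - a r) * (\<Prod>t\<in>{1..<m-c}. (A t - a r)))"
  have Mc: "M \<in> carrier_mat (Suc m) (Suc m)" and Uc: "U \<in> carrier_mat (Suc m) (Suc m)"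
    unfolding M_def U_def by auto
  have dU: "det U = 1"
  proof -
    have "det U = prod_list (diag_mat U)"
      by (rule det_lower_triangular[OF _ Uc]) (auto simp: U_def)
    also have "diag_mat U = map (\<lambda>i. 1) [0..<Suc m]" unfolding diag_mat_def
      by (rule map_cong) (auto simp: U_def)
    also have "prod_list \<dots> = 1" by (simp add: map_replicate_const)
    finally show ?thesis .
  qed
  have MU: "M * U = N"
  proof (rule eq_matI)
    fix r c assume "r < dim_row N" "c < dim_col N"
    then have r: "r < Suc m" and c: "c < Suc m" by (auto simp: N_def)
    have "(M * U) $$ (r, c) = (\<Sum>l\<in>{0..<Suc m}. M $$ (r, l) * U $$ (l, c))"
      using r c Mc Uc by (simp add: scalar_prod_def)
    also have "\<dots> = (\<Sum>l\<in>{0..<Suc m}. (if l = c then M $$ (r, c) else 0) + (if l = Suc c then M $$ (r, Suc c) * (- (A (m - c) - a m)) else 0))"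
      by (rule sum.cong) (auto simp: U_def c)
    also have "\<dots> = M $$ (r, c) + (if Suc c < Suc m then M $$ (r, Suc c) * (- (A (m - c) - a m)) else 0)"
      using c by (simp add: sum.distrib)
    also have "\<dots> = N $$ (r, c)"
    proof (cases "c = m")
      case True then show ?thesis using r by (simp add: M_def N_def)
    next
      case False
      then have cm: "c < m" using c by simp
      have "{1..<Suc m - c} = insert (m - c) {1..<m - c}" using cm by auto
      then have "M $$ (r, c) = (A (m - c) - a r) * (\<Prod>t\<in>{1..<m-c}. (A t - a r))"
        using r c by (simp add: M_def)
      moreover have "M $$ (r, Suc c) = (\<Prod>t\<in>{1..<m-c}. (A t - a r))"
        using r cm by (simp add: M_def)
      ultimately show ?thesis using r c cm by (simp add: N_def algebra_simps)
    qed
    finally show "(M * U) $$ (r, c) = N $$ (r, c)" .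
  qed (auto simp: M_def U_def N_def)
  have "det M = det N"
    using det_mult[OF Mc Uc] dU MU by simp
  also have "det N = (\<Sum>j<Suc m. N $$ (m, j) * cofactor N m j)"
    by (rule laplace_expansion_row) (auto simp: N_def)
  also have "\<dots> = cofactor N m m"
    by (subst sum.remove[of _ m]) (auto simp: N_def intro!: sum.neutral)
  also have "\<dots> = det (mat_delete N m m)"
    by (simp add: cofactor_def)
  also have "mat_delete N m m = mat m m (\<lambda>(r,c). (a m - a r) * (\<Prod>t\<in>{1..<m-c}. (A t - a r)))"
    by (rule eq_matI) (auto simp: mat_delete_def N_def)
  also have "det \<dots> = (\<Prod>r<m. (a m - a r)) * det (mat m m (\<lambda>(r,c). \<Prod>t\<in>{1..<m-c}. (A t - a r)))"
    by (rule det_row_factor)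
  also have "\<dots> = (\<Prod>r'<Suc m. \<Prod>r<r'. (a r' - a r))"
    using Suc.IH by (simp add: mult.commute)
  finally show ?case unfolding M_def .
qed


lemma DM_cong: "(\<And>c. c < d \<Longrightarrow> p c = p' c) \<Longrightarrow> DM A av d p = DM A av d p'"
  unfolding DM_def by (rule eq_matI) auto

lemma det_rec:
  assumes av: "\<And>r. r < d \<Longrightarrow> av r = A (q r)" and Aq: "\<And>r. r < d \<Longrightarrow> A (q r) \<noteq> 0"
    and q1: "\<And>r. r < d \<Longrightarrow> 1 \<le> q r"
    and qdec: "\<And>c. Suc c < d \<Longrightarrow> q (Suc c) < q c"
    and pdec: "\<And>c. Suc c < d \<Longrightarrow> p (Suc c) < p c"
    and p1: "\<And>c. c < d \<Longrightarrow> 1 \<le> p c" and pq: "\<And>c. c < d \<Longrightarrow> p c \<le> q c"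
    and Ap: "\<And>c. c < d \<Longrightarrow> A (p c) \<noteq> 0"
  shows "(\<Prod>r<d. av r) * (\<Sum>S\<in>Pow {c. c < d \<and> (c = 0 \<or> Suc (p c) \<noteq> p (c - 1)) \<and> p c < q c}. det (DM A av d (shiftp p S)))
       = (\<Prod>c<d. A (p c)) * det (DM A av d p)"
proof -
  define B where "B = {c. 1 \<le> c \<and> c < d \<and> Suc (p c) = p (c - 1)}"
  define U where "U = {0..<d} - B"
  define Ad where "Ad = {c. c < d \<and> (c = 0 \<or> Suc (p c) \<noteq> p (c - 1)) \<and> p c < q c}"
  have avnz: "\<And>r. r < d \<Longrightarrow> av r \<noteq> 0" using av Aq by simp
  have W: "(\<Prod>r<d. av r) \<noteq> 0" using avnz by (simp add: prod_zero_iff)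
  have e1: "det (MX A av d {0..<d} p) = (\<Prod>c<d. A (p c)) / (\<Prod>r<d. av r) * det (DM A av d p)"
    by (rule det_MX_all[where A = A and p = p and av = av and d = d]) (use p1 avnz in auto)
  have e2: "det (MX A av d {0..<d} p) = det (MX A av d U p)"
    unfolding U_def B_def by (rule det_MX_blocked[where A = A and p = p and av = av and d = d]) (use p1 Ap avnz in auto)
  have e3: "det (MX A av d U p) = (\<Sum>S\<in>Pow U. det (DM A av d (shiftp p S)))"
    by (rule det_MX) (auto simp: U_def)
  have e4: "(\<Sum>S\<in>Pow U. det (DM A av d (shiftp p S))) = (\<Sum>S\<in>Pow Ad. det (DM A av d (shiftp p S)))"
  proof (rule sum.mono_neutral_right)
    show "finite (Pow U)" by (simp add: U_def)
    show "Pow Ad \<subseteq> Pow U" unfolding Ad_def U_def B_def by auto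
    show "\<forall>S\<in>Pow U - Pow Ad. det (DM A av d (shiftp p S)) = 0"
    proof
      fix S assume S: "S \<in> Pow U - Pow Ad"
      then obtain c where c: "c \<in> S" "c \<notin> Ad" by auto
      have SU: "S \<subseteq> U" using S by auto
      have cd: "c < d" and cB: "c \<notin> B" using c SU unfolding U_def by auto
      have "\<not> p c < q c" using c cd cB unfolding Ad_def B_def by auto
      then have pcq: "p c = q c" using pq[OF cd] by simp
      have sdec: "shiftp p S (Suc c') < shiftp p S c'" if c': "Suc c' < d" for c'
      proof -
        have lt: "p (Suc c') < p c'" by (rule pdec[OF c'])
        show ?thesis
        proof (cases "Suc c' \<in> S")
          case True
          then have "Suc c' \<notin> B" using SU unfolding U_def by auto
          then have "Suc (p (Suc c')) \<noteq> p c'" using c' unfolding B_def by simp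
          then show ?thesis using lt True unfolding shiftp_def by simp
        next
          case False
          then show ?thesis using lt unfolding shiftp_def by simp
        qed
      qed
      have gt: "q c < shiftp p S c" using c pcq unfolding shiftp_def by simp
      show "det (DM A av d (shiftp p S)) = 0"
        by (rule det_DM_support[where A = A and av = av and q = q and k = c and p = "shiftp p S"])
          (use av Aq q1 qdec sdec cd gt in auto)
    qed
  qed
  have "(\<Sum>S\<in>Pow Ad. det (DM A av d (shiftp p S))) = (\<Prod>c<d. A (p c)) / (\<Prod>r<d. av r) * det (DM A av d p)"
    using e1 e2 e3 e4 by simp
  then show ?thesis unfolding Ad_def[symmetric] using W by (simp add: field_simps)
qed





lemma part_mono:
  assumes "is_partition lam" "1 \<le> i" "i \<le> i'"
  shows "part lam i' \<le> part lam i"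
proof (cases "i' \<le> length lam")
  case True
  have "sorted_wrt (\<ge>) lam" using assms(1) unfolding Defs.is_partition_def by simp
  then have "i - 1 \<le> i' - 1 \<Longrightarrow> i' - 1 < length lam \<Longrightarrow> lam ! (i' - 1) \<le> lam ! (i - 1)"
  proof -
    assume a: "i - 1 \<le> i' - 1" "i' - 1 < length lam"
    show ?thesis
    proof (cases "i - 1 = i' - 1")
      case True then show ?thesis by simp
    next
      case False
      then have "i - 1 < i' - 1" using a by simp
      from sorted_wrt_nth_less[OF \<open>sorted_wrt (\<ge>) lam\<close> this a(2)] show ?thesis by simp
    qed
  qed
  then show ?thesis using assms True unfolding Defs.part_def by auto
next
  case False
  then show ?thesis unfolding Defs.part_def by auto
qed

lemma part_pos: "is_partition lam \<Longrightarrow> 1 \<le> i \<Longrightarrow> i \<le> length lam \<Longrightarrow> 0 < part lam i"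
proof -
  assume "is_partition lam" "1 \<le> i" "i \<le> length lam"
  then have "lam ! (i - 1) \<in> set lam" "0 \<notin> set lam" unfolding Defs.is_partition_def by auto
  then have "lam ! (i - 1) \<noteq> 0"
  proof -
    assume m: "lam ! (i - 1) \<in> set lam" and n: "0 \<notin> set lam"
    show ?thesis
    proof
      assume "lam ! (i - 1) = 0" then show False using m n by simp
    qed
  qed
  then show ?thesis using \<open>1 \<le> i\<close> \<open>i \<le> length lam\<close> unfolding Defs.part_def by simp
qed

lemma part_zero: "i = 0 \<or> length lam < i \<Longrightarrow> part lam i = 0"
  unfolding Defs.part_def by auto

lemma part_pos_iff: assumes "is_partition lam" shows "0 < part lam i \<longleftrightarrow> 1 \<le> i \<and> i \<le> length lam"
proof
  assume "0 < part lam i" then show "1 \<le> i \<and> i \<le> length lam" unfolding Defs.part_def by (auto split: if_splits)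
next
  assume "1 \<le> i \<and> i \<le> length lam" then show "0 < part lam i" using part_pos assms by blast
qed

definition valid :: "nat list \<Rightarrow> (nat \<Rightarrow> nat) \<Rightarrow> bool" where
  "valid lam \<mu> \<longleftrightarrow> (\<forall>i. \<mu> i \<le> part lam i) \<and> (\<forall>i. 1 \<le> i \<longrightarrow> \<mu> (Suc i) \<le> \<mu> i)"

definition ysk :: "nat list \<Rightarrow> (nat \<Rightarrow> nat) \<Rightarrow> (nat \<times> nat) set" where
  "ysk lam \<mu> = {(i, j). (i, j) \<in> young lam \<and> \<mu> i < j}"

definition sitS :: "nat list \<Rightarrow> (nat \<Rightarrow> nat) \<Rightarrow> ((nat \<times> nat) \<Rightarrow> nat) set" where
  "sitS lam \<mu> = {T. (\<forall>c. c \<notin> ysk lam \<mu> \<longrightarrow> T c = 0)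
     \<and> (\<forall>i j j'. (i, j) \<in> ysk lam \<mu> \<and> (i, j') \<in> ysk lam \<mu> \<and> j < j' \<longrightarrow> T (i, j) < T (i, j'))
     \<and> (\<forall>i i' j. (i, j) \<in> ysk lam \<mu> \<and> (i', j) \<in> ysk lam \<mu> \<and> i < i' \<longrightarrow> T (i, j) < T (i', j))
     \<and> (\<exists>m. T ` ysk lam \<mu> = {1..m})}"

definition mS :: "nat list \<Rightarrow> (nat \<Rightarrow> nat) \<Rightarrow> ((nat \<times> nat) \<Rightarrow> nat) \<Rightarrow> nat" where
  "mS lam \<mu> T = card (T ` ysk lam \<mu>)"

definition addS :: "nat list \<Rightarrow> (nat \<Rightarrow> nat) \<Rightarrow> nat set" where
  "addS lam \<mu> = {i. 1 \<le> i \<and> \<mu> i < part lam i \<and> (i = 1 \<or> \<mu> i < \<mu> (i - 1))}"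

definition plusS :: "(nat \<Rightarrow> nat) \<Rightarrow> nat set \<Rightarrow> nat \<Rightarrow> nat" where
  "plusS \<mu> S i = \<mu> i + (if i \<in> S then 1 else 0)"

definition cellsS :: "(nat \<Rightarrow> nat) \<Rightarrow> nat set \<Rightarrow> (nat \<times> nat) set" where
  "cellsS \<mu> S = (\<lambda>i. (i, Suc (\<mu> i))) ` S"

definition Phi :: "nat list \<Rightarrow> (nat \<Rightarrow> nat) \<Rightarrow> nat set \<Rightarrow> ((nat \<times> nat) \<Rightarrow> nat) \<Rightarrow> (nat \<times> nat) \<Rightarrow> nat" where
  "Phi lam \<mu> S T' c = (if c \<in> cellsS \<mu> S then 1 else if c \<in> ysk lam (plusS \<mu> S) then Suc (T' c) else 0)"

definition SofT :: "nat list \<Rightarrow> (nat \<Rightarrow> nat) \<Rightarrow> ((nat \<times> nat) \<Rightarrow> nat) \<Rightarrow> nat set" where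
  "SofT lam \<mu> T = {i. (i, Suc (\<mu> i)) \<in> ysk lam \<mu> \<and> T (i, Suc (\<mu> i)) = 1}"

definition TofT :: "nat list \<Rightarrow> (nat \<Rightarrow> nat) \<Rightarrow> ((nat \<times> nat) \<Rightarrow> nat) \<Rightarrow> (nat \<times> nat) \<Rightarrow> nat" where
  "TofT lam \<mu> T c = (if c \<in> ysk lam (plusS \<mu> (SofT lam \<mu> T)) then T c - 1 else 0)"

definition Gsum :: "nat list \<Rightarrow> ((nat \<Rightarrow> nat) \<Rightarrow> 'a::comm_ring_1) \<Rightarrow> (nat \<Rightarrow> nat) \<Rightarrow> 'a" where
  "Gsum lam F \<mu> = (\<Sum>T\<in>sitS lam \<mu>. \<Prod>k=1..mS lam \<mu> T. F (\<lambda>i. nu lam T k i))"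

lemma young_Sigma: "young lam = Sigma {1..length lam} (\<lambda>i. {1..part lam i})"
  unfolding Defs.young_def Defs.part_def by (auto split: if_splits)

lemma young_finite: "finite (young lam)"
  unfolding young_Sigma by auto

lemma ysk_finite: "finite (ysk lam \<mu>)"
  unfolding ysk_def using young_finite by (rule finite_subset[rotated]) auto

lemma sitS_D:
  assumes "T \<in> sitS lam \<mu>"
  shows sitS_zero: "\<And>c. c \<notin> ysk lam \<mu> \<Longrightarrow> T c = 0"
    and sitS_row: "\<And>i j j'. (i, j) \<in> ysk lam \<mu> \<Longrightarrow> (i, j') \<in> ysk lam \<mu> \<Longrightarrow> j < j' \<Longrightarrow> T (i, j) < T (i, j')"
    and sitS_col: "\<And>i i' j. (i, j) \<in> ysk lam \<mu> \<Longrightarrow> (i', j) \<in> ysk lam \<mu> \<Longrightarrow> i < i' \<Longrightarrow> T (i, j) < T (i', j)"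
    and sitS_img: "\<exists>m. T ` ysk lam \<mu> = {1..m}"
proof -
  show "\<And>c. c \<notin> ysk lam \<mu> \<Longrightarrow> T c = 0"
  proof -
    fix c assume "c \<notin> ysk lam \<mu>"
    then show "T c = 0" using assms unfolding sitS_def by (cases c) simp
  qed
qed (use assms in \<open>simp_all add: sitS_def\<close>)

lemma sitS_I:
  assumes "\<And>c. c \<notin> ysk lam \<mu> \<Longrightarrow> T c = 0"
    and "\<And>i j j'. (i, j) \<in> ysk lam \<mu> \<Longrightarrow> (i, j') \<in> ysk lam \<mu> \<Longrightarrow> j < j' \<Longrightarrow> T (i, j) < T (i, j')"
    and "\<And>i i' j. (i, j) \<in> ysk lam \<mu> \<Longrightarrow> (i', j) \<in> ysk lam \<mu> \<Longrightarrow> i < i' \<Longrightarrow> T (i, j) < T (i', j)"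
    and "T ` ysk lam \<mu> = {1..m}"
  shows "T \<in> sitS lam \<mu>"
  using assms unfolding sitS_def by blast

lemma sitS_pos: assumes "T \<in> sitS lam \<mu>" "c \<in> ysk lam \<mu>" shows "1 \<le> T c"
proof -
  obtain m where m: "T ` ysk lam \<mu> = {1..m}" using sitS_img[OF assms(1)] by blast
  have "T c \<in> T ` ysk lam \<mu>" using assms(2) by (rule imageI)
  then show ?thesis using m by simp
qed

lemma sitS_le: "T \<in> sitS lam \<mu> \<Longrightarrow> T c \<le> card (ysk lam \<mu>)"
proof -
  assume T: "T \<in> sitS lam \<mu>"
  then obtain m where m: "T ` ysk lam \<mu> = {1..m}" using sitS_img by blast
  have "m = card (T ` ysk lam \<mu>)" using m by simp
  also have "\<dots> \<le> card (ysk lam \<mu>)" by (rule card_image_le[OF ysk_finite])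
  finally have mle: "m \<le> card (ysk lam \<mu>)" .
  show ?thesis
  proof (cases "c \<in> ysk lam \<mu>")
    case True
    then have "T c \<in> T ` ysk lam \<mu>" by (rule imageI)
    then have "T c \<in> {1..m}" using m by simp
    then show ?thesis using mle by simp
  next
    case False
    have "T c = 0" using sitS_zero[OF T False] .
    then show ?thesis by simp
  qed
qed

lemma sitS_finite: "finite (sitS lam \<mu>)"
proof -
  have "sitS lam \<mu> \<subseteq> {T. \<forall>c. (c \<in> ysk lam \<mu> \<longrightarrow> T c \<in> {0..card (ysk lam \<mu>)}) \<and> (c \<notin> ysk lam \<mu> \<longrightarrow> T c = 0)}"
  proof
    fix T assume T: "T \<in> sitS lam \<mu>"
    then show "T \<in> {T. \<forall>c. (c \<in> ysk lam \<mu> \<longrightarrow> T c \<in> {0..card (ysk lam \<mu>)}) \<and> (c \<notin> ysk lam \<mu> \<longrightarrow> T c = 0)}"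
      using sitS_le[OF T] by (auto simp: sitS_def)
  qed
  moreover have "finite {T. \<forall>c. (c \<in> ysk lam \<mu> \<longrightarrow> T c \<in> {0..card (ysk lam \<mu>)}) \<and> (c \<notin> ysk lam \<mu> \<longrightarrow> T c = 0)}"
    by (rule finite_set_of_finite_funs[OF ysk_finite]) simp
  ultimately show ?thesis by (rule finite_subset)
qed

lemma mS_eq: "T ` ysk lam \<mu> = {1..m} \<Longrightarrow> mS lam \<mu> T = m"
  unfolding mS_def by simp

lemma young_iff: "(i, j) \<in> young lam \<longleftrightarrow> 1 \<le> i \<and> 1 \<le> j \<and> j \<le> part lam i"
  unfolding Defs.young_def by simp

lemma ysk_iff: "(i, j) \<in> ysk lam \<mu> \<longleftrightarrow> 1 \<le> i \<and> 1 \<le> j \<and> j \<le> part lam i \<and> \<mu> i < j"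
  unfolding ysk_def Defs.young_def by simp

lemma valid_mono:
  assumes "valid lam \<mu>" "1 \<le> i" "i \<le> i'"
  shows "\<mu> i' \<le> \<mu> i"
  using assms(3)
proof (induction i')
  case 0 then show ?case by simp
next
  case (Suc i')
  show ?case
  proof (cases "i = Suc i'")
    case True then show ?thesis by simp
  next
    case False
    then have "i \<le> i'" using Suc.prems by simp
    moreover have "\<mu> (Suc i') \<le> \<mu> i'" using assms(1,2) \<open>i \<le> i'\<close> unfolding valid_def by simp
    ultimately show ?thesis using Suc.IH by simp
  qed
qed

lemma addS_sub: "is_partition lam \<Longrightarrow> addS lam \<mu> \<subseteq> {1..length lam}"
  unfolding addS_def using part_pos_iff[of lam] by fastforce

lemma addS_finite: "is_partition lam \<Longrightarrow> finite (addS lam \<mu>)"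
  using addS_sub finite_subset by blast

lemma plus_valid:
  assumes "valid lam \<mu>" "S \<subseteq> addS lam \<mu>"
  shows "valid lam (plusS \<mu> S)"
  unfolding valid_def
proof (intro conjI allI impI)
  fix i
  show "plusS \<mu> S i \<le> part lam i"
    using assms unfolding plusS_def addS_def valid_def by (auto simp: Suc_le_eq)
next
  fix i :: nat assume i: "1 \<le> i"
  have m: "\<mu> (Suc i) \<le> \<mu> i" using assms(1) i unfolding valid_def by simp
  show "plusS \<mu> S (Suc i) \<le> plusS \<mu> S i"
  proof (cases "Suc i \<in> S")
    case True
    then have "\<mu> (Suc i) < \<mu> i" using assms(2) i unfolding addS_def by auto
    then show ?thesis unfolding plusS_def by auto
  next
    case False
    then show ?thesis using m unfolding plusS_def by auto
  qed
qed

lemma cells_sub: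
  assumes "S \<subseteq> addS lam \<mu>"
  shows "cellsS \<mu> S \<subseteq> ysk lam \<mu>"
  using assms unfolding cellsS_def addS_def by (auto simp: ysk_iff Suc_le_eq)

lemma ysk_decomp:
  assumes "S \<subseteq> addS lam \<mu>"
  shows "ysk lam \<mu> = cellsS \<mu> S \<union> ysk lam (plusS \<mu> S)"
    and "cellsS \<mu> S \<inter> ysk lam (plusS \<mu> S) = {}"
proof -
  show "ysk lam \<mu> = cellsS \<mu> S \<union> ysk lam (plusS \<mu> S)"
  proof
    show "ysk lam \<mu> \<subseteq> cellsS \<mu> S \<union> ysk lam (plusS \<mu> S)"
    proof
      fix c assume c: "c \<in> ysk lam \<mu>"
      obtain i j where cij: "c = (i, j)" by (cases c)
      show "c \<in> cellsS \<mu> S \<union> ysk lam (plusS \<mu> S)"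
      proof (cases "i \<in> S \<and> j = Suc (\<mu> i)")
        case True then show ?thesis unfolding cij cellsS_def by auto
      next
        case False
        then have "plusS \<mu> S i < j" using c unfolding cij plusS_def by (auto simp: ysk_iff)
        then show ?thesis using c unfolding cij by (auto simp: ysk_iff)
      qed
    qed
  next
    show "cellsS \<mu> S \<union> ysk lam (plusS \<mu> S) \<subseteq> ysk lam \<mu>"
      using cells_sub[OF assms] unfolding plusS_def by (auto simp: ysk_iff)
  qed
next
  show "cellsS \<mu> S \<inter> ysk lam (plusS \<mu> S) = {}"
    unfolding cellsS_def plusS_def by (auto simp: ysk_iff)
qed

lemma cellsS_mem: "(i, j) \<in> cellsS \<mu> S \<longleftrightarrow> i \<in> S \<and> j = Suc (\<mu> i)"
  unfolding cellsS_def by auto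

lemma Phi_sitS:
  assumes lam: "is_partition lam" and v: "valid lam \<mu>" and S: "S \<subseteq> addS lam \<mu>" "S \<noteq> {}"
    and T': "T' \<in> sitS lam (plusS \<mu> S)" and m: "T' ` ysk lam (plusS \<mu> S) = {1..m}"
  shows "Phi lam \<mu> S T' \<in> sitS lam \<mu>" and "Phi lam \<mu> S T' ` ysk lam \<mu> = {1..Suc m}"
proof -
  let ?Y = "ysk lam \<mu>" and ?Y' = "ysk lam (plusS \<mu> S)" and ?C = "cellsS \<mu> S" and ?P = "Phi lam \<mu> S T'"
  note dec = ysk_decomp[OF S(1)]
  have CY: "?C \<subseteq> ?Y" by (rule cells_sub[OF S(1)])
  have pos: "c \<in> ?Y' \<Longrightarrow> 1 \<le> T' c" for c by (rule sitS_pos[OF T'])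
  have PC: "c \<in> ?C \<Longrightarrow> ?P c = 1" for c unfolding Phi_def by simp
  have PY: "c \<in> ?Y' \<Longrightarrow> ?P c = Suc (T' c)" for c using dec(2) unfolding Phi_def by auto
  have img: "?P ` ?Y = {1..Suc m}"
  proof -
    have "?P ` ?Y = ?P ` ?C \<union> ?P ` ?Y'" using dec(1) by auto
    also have "?P ` ?C = {1}" using PC S(2) unfolding cellsS_def by auto
    also have "?P ` ?Y' = Suc ` (T' ` ?Y')" using PY by (auto simp: image_iff)
    also have "Suc ` (T' ` ?Y') = {2..Suc m}" unfolding m by (simp add: image_Suc_atLeastAtMost)
    also have "{1} \<union> {2..Suc m} = {1..Suc m}" by auto
    finally show ?thesis .
  qed
  show "?P \<in> sitS lam \<mu>"
  proof (rule sitS_I[OF _ _ _ img])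
    fix c assume "c \<notin> ?Y"
    then show "?P c = 0" using dec(1) unfolding Phi_def by auto
  next
    fix i j j' assume a: "(i, j) \<in> ?Y" "(i, j') \<in> ?Y" "j < j'"
    have "(i, j') \<notin> ?C"
    proof
      assume "(i, j') \<in> ?C"
      then have "j' = Suc (\<mu> i)" by (simp add: cellsS_mem)
      then show False using a by (auto simp: ysk_iff)
    qed
    then have j': "(i, j') \<in> ?Y'" using a(2) dec(1) by auto
    show "?P (i, j) < ?P (i, j')"
    proof (cases "(i, j) \<in> ?C")
      case True then show ?thesis using PC PY j' pos[OF j'] by simp
    next
      case False
      then have "(i, j) \<in> ?Y'" using a(1) dec(1) by auto
      then show ?thesis using PY j' sitS_row[OF T' _ j' a(3)] by simp
    qed
  next
    fix i i' j assume a: "(i, j) \<in> ?Y" "(i', j) \<in> ?Y" "i < i'"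
    have "(i', j) \<notin> ?C"
    proof
      assume "(i', j) \<in> ?C"
      then have i'S: "i' \<in> S" and j: "j = Suc (\<mu> i')" by (auto simp: cellsS_mem)
      have i1: "1 \<le> i" using a(1) by (simp add: ysk_iff)
      then have "i' \<noteq> 1" using a(3) by simp
      then have lt: "\<mu> i' < \<mu> (i' - 1)" using i'S S(1) unfolding addS_def by auto
      have "\<mu> (i' - 1) \<le> \<mu> i" using valid_mono[OF v i1, of "i' - 1"] a(3) by simp
      moreover have "\<mu> i < j" using a(1) by (simp add: ysk_iff)
      ultimately show False using lt j by simp
    qed
    then have i': "(i', j) \<in> ?Y'" using a(2) dec(1) by auto
    show "?P (i, j) < ?P (i', j)"
    proof (cases "(i, j) \<in> ?C")
      case True then show ?thesis using PC PY i' pos[OF i'] by simp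
    next
      case False
      then have "(i, j) \<in> ?Y'" using a(1) dec(1) by auto
      then show ?thesis using PY i' sitS_col[OF T' _ i' a(3)] by simp
    qed
  qed
  show "?P ` ?Y = {1..Suc m}" by (rule img)
qed

lemma sitS_one_cell:
  assumes v: "valid lam \<mu>" and T: "T \<in> sitS lam \<mu>" and c: "(i, j) \<in> ysk lam \<mu>" and T1: "T (i, j) = 1"
  shows "j = Suc (\<mu> i)"
proof (rule ccontr)
  assume "j \<noteq> Suc (\<mu> i)"
  then have lt: "Suc (\<mu> i) < j" using c by (auto simp: ysk_iff)
  have c': "(i, Suc (\<mu> i)) \<in> ysk lam \<mu>" using c lt by (auto simp: ysk_iff)
  have "T (i, Suc (\<mu> i)) < T (i, j)" by (rule sitS_row[OF T c' c lt])
  moreover have "1 \<le> T (i, Suc (\<mu> i))" by (rule sitS_pos[OF T c'])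
  ultimately show False using T1 by simp
qed

lemma Psi_props:
  assumes lam: "is_partition lam" and v: "valid lam \<mu>" and T: "T \<in> sitS lam \<mu>" and ne: "ysk lam \<mu> \<noteq> {}"
  shows "SofT lam \<mu> T \<subseteq> addS lam \<mu>" and "SofT lam \<mu> T \<noteq> {}"
    and "TofT lam \<mu> T \<in> sitS lam (plusS \<mu> (SofT lam \<mu> T))"
    and "Phi lam \<mu> (SofT lam \<mu> T) (TofT lam \<mu> T) = T"
proof -
  let ?S = "SofT lam \<mu> T"
  let ?Y = "ysk lam \<mu>"
  show S: "?S \<subseteq> addS lam \<mu>"
  proof
    fix i assume "i \<in> ?S"
    then have c: "(i, Suc (\<mu> i)) \<in> ?Y" and T1: "T (i, Suc (\<mu> i)) = 1" unfolding SofT_def by auto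
    have i1: "1 \<le> i" and lt: "\<mu> i < part lam i" using c by (auto simp: ysk_iff Suc_le_eq)
    have "i = 1 \<or> \<mu> i < \<mu> (i - 1)"
    proof (rule ccontr)
      assume "\<not> (i = 1 \<or> \<mu> i < \<mu> (i - 1))"
      then have i2: "2 \<le> i" and ge: "\<mu> (i - 1) \<le> \<mu> i" using i1 by auto
      have "\<mu> i \<le> \<mu> (i - 1)" using valid_mono[OF v, of "i - 1" i] i2 by simp
      then have eq: "\<mu> (i - 1) = \<mu> i" using ge by simp
      have "part lam i \<le> part lam (i - 1)" using part_mono[OF lam, of "i - 1" i] i2 by simp
      then have c': "(i - 1, Suc (\<mu> i)) \<in> ?Y" using c eq i2 by (auto simp: ysk_iff)
      have "T (i - 1, Suc (\<mu> i)) < T (i, Suc (\<mu> i))" using sitS_col[OF T c' c] i2 by simp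
      moreover have "1 \<le> T (i - 1, Suc (\<mu> i))" by (rule sitS_pos[OF T c'])
      ultimately show False using T1 by simp
    qed
    then show "i \<in> addS lam \<mu>" unfolding addS_def using i1 lt by simp
  qed
  obtain m where m: "T ` ?Y = {1..m}" using sitS_img[OF T] by blast
  have m1: "1 \<le> m" using m ne by (metis atLeastatMost_empty_iff2 image_is_empty linorder_not_le less_one)
  then have "1 \<in> T ` ?Y" using m by simp
  then obtain c where c: "c \<in> ?Y" "T c = 1" by auto
  obtain i j where cij: "c = (i, j)" by (cases c)
  have "j = Suc (\<mu> i)" using sitS_one_cell[OF v T] c cij by simp
  then have "i \<in> ?S" using c cij unfolding SofT_def by simp
  then show "?S \<noteq> {}" by auto
  have C: "cellsS \<mu> ?S = {c \<in> ?Y. T c = 1}"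
  proof
    show "cellsS \<mu> ?S \<subseteq> {c \<in> ?Y. T c = 1}" unfolding cellsS_def SofT_def by auto
  next
    show "{c \<in> ?Y. T c = 1} \<subseteq> cellsS \<mu> ?S"
    proof
      fix c assume c: "c \<in> {c \<in> ?Y. T c = 1}"
      obtain i j where cij: "c = (i, j)" by (cases c)
      have "j = Suc (\<mu> i)" using sitS_one_cell[OF v T] c cij by simp
      then show "c \<in> cellsS \<mu> ?S" using c cij unfolding SofT_def cellsS_def by auto
    qed
  qed
  note dec = ysk_decomp[OF S]
  let ?Y' = "ysk lam (plusS \<mu> ?S)"
  have Y': "?Y' = {c \<in> ?Y. T c \<noteq> 1}" using dec C by auto
  have T2: "c \<in> ?Y' \<Longrightarrow> 2 \<le> T c" for c using Y' sitS_pos[OF T, of c] by fastforce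
  let ?T' = "TofT lam \<mu> T"
  have T'Y: "c \<in> ?Y' \<Longrightarrow> ?T' c = T c - 1" for c unfolding TofT_def by simp
  show "?T' \<in> sitS lam (plusS \<mu> ?S)"
  proof (rule sitS_I)
    fix c assume "c \<notin> ?Y'" then show "?T' c = 0" unfolding TofT_def by simp
  next
    fix i j j' assume a: "(i, j) \<in> ?Y'" "(i, j') \<in> ?Y'" "j < j'"
    have "T (i, j) < T (i, j')" using sitS_row[OF T _ _ a(3)] a Y' by auto
    then show "?T' (i, j) < ?T' (i, j')" using T'Y[OF a(1)] T'Y[OF a(2)] T2[OF a(1)] by simp
  next
    fix i i' j assume a: "(i, j) \<in> ?Y'" "(i', j) \<in> ?Y'" "i < i'"
    have "T (i, j) < T (i', j)" using sitS_col[OF T _ _ a(3)] a Y' by auto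
    then show "?T' (i, j) < ?T' (i', j)" using T'Y[OF a(1)] T'Y[OF a(2)] T2[OF a(1)] by simp
  next
    have "T ` ?Y' = {2..m}"
    proof
      show "T ` ?Y' \<subseteq> {2..m}"
      proof
        fix v assume "v \<in> T ` ?Y'"
        then obtain c where c: "c \<in> ?Y'" "v = T c" by auto
        have "T c \<in> {1..m}" using m c Y' by auto
        then show "v \<in> {2..m}" using T2[OF c(1)] c by simp
      qed
    next
      show "{2..m} \<subseteq> T ` ?Y'"
      proof
        fix v assume v: "v \<in> {2..m}"
        then have "v \<in> T ` ?Y" using m by auto
        then obtain c where c: "c \<in> ?Y" "T c = v" by auto
        then have "c \<in> ?Y'" using Y' v by auto
        then show "v \<in> T ` ?Y'" using c by auto
      qed
    qed
    moreover have "?T' ` ?Y' = (\<lambda>v. v - 1) ` (T ` ?Y')"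
    proof -
      have "?T' ` ?Y' = (\<lambda>c. T c - 1) ` ?Y'" by (rule image_cong[OF refl T'Y])
      then show ?thesis by (simp add: image_image)
    qed
    ultimately have "?T' ` ?Y' = (\<lambda>v. v - 1) ` {2..m}" by simp
    also have "\<dots> = {1..m - 1}"
    proof -
      have e: "{2..m} = Suc ` {1..m - 1}"
      proof
        show "{2..m} \<subseteq> Suc ` {1..m - 1}"
        proof
          fix x assume x: "x \<in> {2..m}"
          then have "x = Suc (x - 1)" "x - 1 \<in> {1..m - 1}" by auto
          then show "x \<in> Suc ` {1..m - 1}" by blast
        qed
      qed (use m1 in auto)
      show ?thesis unfolding e image_image by simp
    qed
    finally show "?T' ` ?Y' = {1..m - 1}" .
  qed
  show "Phi lam \<mu> ?S ?T' = T"
  proof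
    fix c
    show "Phi lam \<mu> ?S ?T' c = T c"
    proof (cases "c \<in> cellsS \<mu> ?S")
      case True then show ?thesis using C unfolding Phi_def by auto
    next
      case False
      show ?thesis
      proof (cases "c \<in> ?Y'")
        case True then show ?thesis using False T'Y T2 unfolding Phi_def by fastforce
      next
        case False2: False
        then have "c \<notin> ?Y" using False dec(1) by auto
        then show ?thesis using False False2 sitS_zero[OF T] unfolding Phi_def by simp
      qed
    qed
  qed
qed

lemma Psi_Phi:
  assumes S: "S \<subseteq> addS lam \<mu>" and T': "T' \<in> sitS lam (plusS \<mu> S)"
  shows "SofT lam \<mu> (Phi lam \<mu> S T') = S" and "TofT lam \<mu> (Phi lam \<mu> S T') = T'"
proof -
  note dec = ysk_decomp[OF S]
  show SS: "SofT lam \<mu> (Phi lam \<mu> S T') = S"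
  proof
    show "SofT lam \<mu> (Phi lam \<mu> S T') \<subseteq> S"
    proof
      fix i assume "i \<in> SofT lam \<mu> (Phi lam \<mu> S T')"
      then have c: "(i, Suc (\<mu> i)) \<in> ysk lam \<mu>" and P1: "Phi lam \<mu> S T' (i, Suc (\<mu> i)) = 1"
        unfolding SofT_def by auto
      show "i \<in> S"
      proof (rule ccontr)
        assume "i \<notin> S"
        then have nc: "(i, Suc (\<mu> i)) \<notin> cellsS \<mu> S" by (simp add: cellsS_mem)
        then have y: "(i, Suc (\<mu> i)) \<in> ysk lam (plusS \<mu> S)" using c dec(1) by auto
        have "1 \<le> T' (i, Suc (\<mu> i))" by (rule sitS_pos[OF T' y])
        then show False using P1 nc y unfolding Phi_def by simp
      qed
    qed
  next
    show "S \<subseteq> SofT lam \<mu> (Phi lam \<mu> S T')"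
      using cells_sub[OF S] unfolding SofT_def Phi_def cellsS_def by auto
  qed
  show "TofT lam \<mu> (Phi lam \<mu> S T') = T'"
  proof
    fix c
    show "TofT lam \<mu> (Phi lam \<mu> S T') c = T' c"
      using dec(2) sitS_zero[OF T', of c] unfolding TofT_def SS Phi_def by auto
  qed
qed

lemma nu_one:
  assumes v: "valid lam \<mu>" and T: "T \<in> sitS lam \<mu>"
  shows "(\<lambda>i. nu lam T 1 i) = \<mu>"
proof
  fix i
  have eq: "(i, j) \<in> young lam \<and> T (i, j) < 1 \<longleftrightarrow> 1 \<le> i \<and> 1 \<le> j \<and> j \<le> \<mu> i" for j
  proof
    assume a: "(i, j) \<in> young lam \<and> T (i, j) < 1"
    then have "(i, j) \<notin> ysk lam \<mu>" using sitS_pos[OF T, of "(i, j)"] by auto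
    then show "1 \<le> i \<and> 1 \<le> j \<and> j \<le> \<mu> i" using a by (auto simp: young_iff ysk_iff)
  next
    assume a: "1 \<le> i \<and> 1 \<le> j \<and> j \<le> \<mu> i"
    then have "(i, j) \<notin> ysk lam \<mu>" by (auto simp: ysk_iff)
    then have "T (i, j) = 0" by (rule sitS_zero[OF T])
    moreover have "\<mu> i \<le> part lam i" using v unfolding valid_def by simp
    ultimately show "(i, j) \<in> young lam \<and> T (i, j) < 1" using a by (auto simp: young_iff)
  qed
  have "nu lam T 1 i = card {j. 1 \<le> i \<and> 1 \<le> j \<and> j \<le> \<mu> i}"
    unfolding Defs.nu_def by (simp only: eq)
  also have "\<dots> = \<mu> i"
  proof (cases "1 \<le> i")
    case True
    then have "{j. 1 \<le> i \<and> 1 \<le> j \<and> j \<le> \<mu> i} = {1..\<mu> i}" by auto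
    then show ?thesis by simp
  next
    case False
    then have i0: "i = 0" by simp
    have "\<mu> 0 \<le> part lam 0" using v unfolding valid_def by blast
    then have "\<mu> 0 = 0" by (simp add: Defs.part_def)
    then show ?thesis using i0 by simp
  qed
  finally show "nu lam T 1 i = \<mu> i" .
qed

lemma nu_Phi_Suc:
  assumes S: "S \<subseteq> addS lam \<mu>" and T': "T' \<in> sitS lam (plusS \<mu> S)" and k: "1 \<le> k"
  shows "nu lam (Phi lam \<mu> S T') (Suc k) i = nu lam T' k i"
proof -
  note dec = ysk_decomp[OF S]
  have "(i, j) \<in> young lam \<and> Phi lam \<mu> S T' (i, j) < Suc k \<longleftrightarrow> (i, j) \<in> young lam \<and> T' (i, j) < k" for j
  proof (cases "(i, j) \<in> cellsS \<mu> S")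
    case True
    then have "(i, j) \<notin> ysk lam (plusS \<mu> S)" using dec(2) by auto
    then have "T' (i, j) = 0" by (rule sitS_zero[OF T'])
    then show ?thesis using True k unfolding Phi_def by simp
  next
    case False
    show ?thesis
    proof (cases "(i, j) \<in> ysk lam (plusS \<mu> S)")
      case True then show ?thesis using False unfolding Phi_def by simp
    next
      case False2: False
      then have "T' (i, j) = 0" by (rule sitS_zero[OF T'])
      then show ?thesis using False False2 k unfolding Phi_def by simp
    qed
  qed
  then show ?thesis unfolding Defs.nu_def by simp
qed

lemma sitS_empty_ysk:
  assumes "ysk lam \<mu> = {}"
  shows "sitS lam \<mu> = {\<lambda>c. 0}"
proof
  show "sitS lam \<mu> \<subseteq> {\<lambda>c. 0}"
  proof
    fix T assume T: "T \<in> sitS lam \<mu>"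
    have "T = (\<lambda>c. 0)"
    proof
      fix c show "T c = 0" using sitS_zero[OF T] assms by simp
    qed
    then show "T \<in> {\<lambda>c. 0}" by simp
  qed
next
  have "(\<lambda>c. 0) \<in> sitS lam \<mu>" by (rule sitS_I[where m = 0]) (use assms in auto)
  then show "{\<lambda>c. 0} \<subseteq> sitS lam \<mu>" by simp
qed

lemma Gsum_base:
  assumes "ysk lam \<mu> = {}"
  shows "Gsum lam F \<mu> = 1"
  unfolding Gsum_def sitS_empty_ysk[OF assms] mS_def using assms by simp

lemma addS_nonempty:
  assumes lam: "is_partition lam" and v: "valid lam \<mu>" and ne: "ysk lam \<mu> \<noteq> {}"
  shows "addS lam \<mu> \<noteq> {}"
proof -
  obtain c where c: "c \<in> ysk lam \<mu>" using ne by blast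
  obtain i0 j0 where "c = (i0, j0)" by (cases c)
  then have ex: "\<exists>i. 1 \<le> i \<and> \<mu> i < part lam i" using c by (auto simp: ysk_iff)
  define i where "i = (LEAST i. 1 \<le> i \<and> \<mu> i < part lam i)"
  have i: "1 \<le> i" "\<mu> i < part lam i" using LeastI_ex[OF ex] unfolding i_def by auto
  have "i = 1 \<or> \<mu> i < \<mu> (i - 1)"
  proof (rule ccontr)
    assume a: "\<not> (i = 1 \<or> \<mu> i < \<mu> (i - 1))"
    then have i2: "2 \<le> i" using i by simp
    have "\<not> (1 \<le> i - 1 \<and> \<mu> (i - 1) < part lam (i - 1))"
    proof
      assume "1 \<le> i - 1 \<and> \<mu> (i - 1) < part lam (i - 1)"
      then have "i \<le> i - 1" unfolding i_def by (rule Least_le)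
      then show False using i2 by simp
    qed
    moreover have "1 \<le> i - 1" using i2 by simp
    ultimately have "part lam (i - 1) \<le> \<mu> (i - 1)" by simp
    moreover have "part lam i \<le> part lam (i - 1)" using part_mono[OF lam, of "i - 1" i] i2 by simp
    ultimately show False using a i by simp
  qed
  then have "i \<in> addS lam \<mu>" unfolding addS_def using i by simp
  then show ?thesis by auto
qed

lemma card_ysk_plusS:
  assumes S: "S \<subseteq> addS lam \<mu>" "S \<noteq> {}"
  shows "card (ysk lam (plusS \<mu> S)) < card (ysk lam \<mu>)"
proof -
  note dec = ysk_decomp[OF S(1)]
  have "cellsS \<mu> S \<noteq> {}" using S(2) unfolding cellsS_def by auto
  then have "ysk lam (plusS \<mu> S) \<subset> ysk lam \<mu>" using dec by auto
  then show ?thesis by (rule psubset_card_mono[OF ysk_finite])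
qed

lemma sitS_nonempty:
  assumes lam: "is_partition lam"
  shows "valid lam \<mu> \<Longrightarrow> sitS lam \<mu> \<noteq> {}"
proof (induction \<mu> rule: measure_induct_rule[where f = "\<lambda>\<mu>. card (ysk lam \<mu>)"])
  case (less \<mu>)
  show ?case
  proof (cases "ysk lam \<mu> = {}")
    case True then show ?thesis using sitS_empty_ysk by simp
  next
    case False
    obtain i where i: "i \<in> addS lam \<mu>" using addS_nonempty[OF lam less.prems False] by blast
    let ?S = "{i}"
    have S: "?S \<subseteq> addS lam \<mu>" "?S \<noteq> {}" using i by auto
    have "sitS lam (plusS \<mu> ?S) \<noteq> {}"
      using less.IH[OF card_ysk_plusS[OF S] plus_valid[OF less.prems S(1)]] .
    then obtain T' where T': "T' \<in> sitS lam (plusS \<mu> ?S)" by blast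
    obtain m where "T' ` ysk lam (plusS \<mu> ?S) = {1..m}" using sitS_img[OF T'] by blast
    from Phi_sitS(1)[OF lam less.prems S T' this] show ?thesis by blast
  qed
qed

definition HG :: "nat list \<Rightarrow> ((nat \<Rightarrow> nat) \<Rightarrow> bool) \<Rightarrow> (nat \<Rightarrow> nat) \<Rightarrow> bool" where
  "HG lam P \<mu> \<longleftrightarrow> (\<forall>T\<in>sitS lam \<mu>. \<forall>k\<in>{1..mS lam \<mu> T}. P (\<lambda>i. nu lam T k i))"

lemma HG_plusS:
  assumes lam: "is_partition lam" and v: "valid lam \<mu>" and S: "S \<subseteq> addS lam \<mu>" "S \<noteq> {}"
    and H: "HG lam P \<mu>"
  shows "HG lam P (plusS \<mu> S)"
  unfolding HG_def
proof (intro ballI)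
  fix T' k assume T': "T' \<in> sitS lam (plusS \<mu> S)" and k: "k \<in> {1..mS lam (plusS \<mu> S) T'}"
  obtain m where m: "T' ` ysk lam (plusS \<mu> S) = {1..m}" using sitS_img[OF T'] by blast
  note P = Phi_sitS[OF lam v S T' m]
  have "mS lam \<mu> (Phi lam \<mu> S T') = Suc m" using mS_eq[OF P(2)] .
  moreover have "mS lam (plusS \<mu> S) T' = m" using mS_eq[OF m] .
  ultimately have "Suc k \<in> {1..mS lam \<mu> (Phi lam \<mu> S T')}" using k by simp
  then have "P (\<lambda>i. nu lam (Phi lam \<mu> S T') (Suc k) i)" using H P(1) unfolding HG_def by blast
  moreover have "(\<lambda>i. nu lam (Phi lam \<mu> S T') (Suc k) i) = (\<lambda>i. nu lam T' k i)"
    using nu_Phi_Suc[OF S(1) T'] k by simp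
  ultimately show "P (\<lambda>i. nu lam T' k i)" by simp
qed

lemma HG_self:
  assumes lam: "is_partition lam" and v: "valid lam \<mu>" and ne: "ysk lam \<mu> \<noteq> {}" and H: "HG lam P \<mu>"
  shows "P \<mu>"
proof -
  obtain T where T: "T \<in> sitS lam \<mu>" using sitS_nonempty[OF lam v] by blast
  obtain m where m: "T ` ysk lam \<mu> = {1..m}" using sitS_img[OF T] by blast
  have "m \<noteq> 0" using m ne by auto
  then have "1 \<in> {1..mS lam \<mu> T}" using mS_eq[OF m] by simp
  then have "P (\<lambda>i. nu lam T 1 i)" using H T unfolding HG_def by blast
  then show ?thesis using nu_one[OF v T] by simp
qed

lemma Gsum_rec:
  assumes lam: "is_partition lam" and v: "valid lam \<mu>" and ne: "ysk lam \<mu> \<noteq> {}"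
  shows "Gsum lam F \<mu> = F \<mu> * (\<Sum>S\<in>{S. S \<subseteq> addS lam \<mu> \<and> S \<noteq> {}}. Gsum lam F (plusS \<mu> S))"
proof -
  let ?SS = "{S. S \<subseteq> addS lam \<mu> \<and> S \<noteq> {}}"
  let ?g = "\<lambda>T. \<Prod>k=1..mS lam \<mu> T. F (\<lambda>i. nu lam T k i)"
  let ?h = "\<lambda>(S, T'). ?g (Phi lam \<mu> S T')"
  have fin: "finite ?SS" using addS_finite[OF lam] by (simp add: finite_subset)
  have "Gsum lam F \<mu> = (\<Sum>T\<in>sitS lam \<mu>. ?g T)" unfolding Gsum_def ..
  also have "\<dots> = (\<Sum>ST\<in>Sigma ?SS (\<lambda>S. sitS lam (plusS \<mu> S)). ?h ST)"
  proof (rule sum.reindex_bij_witness[where j = "\<lambda>T. (SofT lam \<mu> T, TofT lam \<mu> T)" and i = "\<lambda>(S, T'). Phi lam \<mu> S T'"])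
    fix T assume T: "T \<in> sitS lam \<mu>"
    note PP = Psi_props[OF lam v T ne]
    show "(case (SofT lam \<mu> T, TofT lam \<mu> T) of (S, T') \<Rightarrow> Phi lam \<mu> S T') = T" using PP(4) by simp
    show "(SofT lam \<mu> T, TofT lam \<mu> T) \<in> Sigma ?SS (\<lambda>S. sitS lam (plusS \<mu> S))" using PP(1-3) by simp
    show "?h (SofT lam \<mu> T, TofT lam \<mu> T) = ?g T" using PP(4) by simp
  next
    fix ST assume ST: "ST \<in> Sigma ?SS (\<lambda>S. sitS lam (plusS \<mu> S))"
    obtain S T' where STe: "ST = (S, T')" by (cases ST)
    have S: "S \<subseteq> addS lam \<mu>" "S \<noteq> {}" and T': "T' \<in> sitS lam (plusS \<mu> S)" using ST STe by auto
    obtain m where m: "T' ` ysk lam (plusS \<mu> S) = {1..m}" using sitS_img[OF T'] by blast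
    show "(SofT lam \<mu> (case ST of (S, T') \<Rightarrow> Phi lam \<mu> S T'), TofT lam \<mu> (case ST of (S, T') \<Rightarrow> Phi lam \<mu> S T')) = ST"
      using Psi_Phi[OF S(1) T'] STe by simp
    show "(case ST of (S, T') \<Rightarrow> Phi lam \<mu> S T') \<in> sitS lam \<mu>"
      using Phi_sitS(1)[OF lam v S T' m] STe by simp
  qed
  also have "\<dots> = (\<Sum>S\<in>?SS. \<Sum>T'\<in>sitS lam (plusS \<mu> S). ?g (Phi lam \<mu> S T'))"
    by (rule sum.Sigma[symmetric, OF fin]) (simp add: sitS_finite)
  also have "\<dots> = (\<Sum>S\<in>?SS. F \<mu> * Gsum lam F (plusS \<mu> S))"
  proof (rule sum.cong[OF refl])
    fix S assume "S \<in> ?SS"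
    then have S: "S \<subseteq> addS lam \<mu>" "S \<noteq> {}" by auto
    have "(\<Sum>T'\<in>sitS lam (plusS \<mu> S). ?g (Phi lam \<mu> S T')) = (\<Sum>T'\<in>sitS lam (plusS \<mu> S). F \<mu> * (\<Prod>k=1..mS lam (plusS \<mu> S) T'. F (\<lambda>i. nu lam T' k i)))"
    proof (rule sum.cong[OF refl])
      fix T' assume T': "T' \<in> sitS lam (plusS \<mu> S)"
      obtain m where m: "T' ` ysk lam (plusS \<mu> S) = {1..m}" using sitS_img[OF T'] by blast
      note P = Phi_sitS[OF lam v S T' m]
      have mm: "mS lam \<mu> (Phi lam \<mu> S T') = Suc m" using mS_eq[OF P(2)] .
      have mm': "mS lam (plusS \<mu> S) T' = m" using mS_eq[OF m] .
      have "?g (Phi lam \<mu> S T') = (\<Prod>k\<in>insert 1 {2..Suc m}. F (\<lambda>i. nu lam (Phi lam \<mu> S T') k i))"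
        unfolding mm by (rule prod.cong) auto
      also have "\<dots> = F (\<lambda>i. nu lam (Phi lam \<mu> S T') 1 i) * (\<Prod>k\<in>{2..Suc m}. F (\<lambda>i. nu lam (Phi lam \<mu> S T') k i))"
        by simp
      also have "(\<lambda>i. nu lam (Phi lam \<mu> S T') 1 i) = \<mu>" by (rule nu_one[OF v P(1)])
      also have "(\<Prod>k\<in>{2..Suc m}. F (\<lambda>i. nu lam (Phi lam \<mu> S T') k i)) = (\<Prod>k\<in>{1..m}. F (\<lambda>i. nu lam (Phi lam \<mu> S T') (Suc k) i))"
      proof -
        have e: "{2..Suc m} = Suc ` {1..m}"
        proof
          show "{2..Suc m} \<subseteq> Suc ` {1..m}"
          proof
            fix x assume x: "x \<in> {2..Suc m}"
            then have "x = Suc (x - 1)" "x - 1 \<in> {1..m}" by auto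
            then show "x \<in> Suc ` {1..m}" by blast
          qed
        qed auto
        show ?thesis unfolding e by (subst prod.reindex) auto
      qed
      also have "\<dots> = (\<Prod>k\<in>{1..m}. F (\<lambda>i. nu lam T' k i))"
        by (rule prod.cong[OF refl]) (simp add: nu_Phi_Suc[OF S(1) T'])
      finally show "?g (Phi lam \<mu> S T') = F \<mu> * (\<Prod>k=1..mS lam (plusS \<mu> S) T'. F (\<lambda>i. nu lam T' k i))"
        unfolding mm' .
    qed
    also have "\<dots> = F \<mu> * Gsum lam F (plusS \<mu> S)" unfolding Gsum_def by (simp add: sum_distrib_left)
    finally show "(\<Sum>T'\<in>sitS lam (plusS \<mu> S). ?g (Phi lam \<mu> S T')) = F \<mu> * Gsum lam F (plusS \<mu> S)" .
  qed
  also have "\<dots> = F \<mu> * (\<Sum>S\<in>?SS. Gsum lam F (plusS \<mu> S))" by (simp add: sum_distrib_left)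
  finally show ?thesis .
qed





lemma conj_part_ge:
  assumes lam: "is_partition lam" and i: "1 \<le> i" and j: "1 \<le> j" "j \<le> part lam i"
  shows "i \<le> conj_part lam j"
proof -
  have il: "i \<le> length lam" using part_pos_iff[OF lam, of i] j by simp
  have "{1..i} \<subseteq> {i' \<in> {1..length lam}. j \<le> part lam i'}"
  proof
    fix i' assume "i' \<in> {1..i}"
    then have "1 \<le> i'" "i' \<le> i" by auto
    then have "part lam i \<le> part lam i'" using part_mono[OF lam] by blast
    then show "i' \<in> {i' \<in> {1..length lam}. j \<le> part lam i'}" using \<open>1 \<le> i'\<close> \<open>i' \<le> i\<close> il j by auto
  qed
  then have "card {1..i} \<le> card {i' \<in> {1..length lam}. j \<le> part lam i'}" by (rule card_mono[rotated]) auto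
  then show ?thesis unfolding Defs.conj_part_def by simp
qed

lemma conj_part_lt:
  assumes lam: "is_partition lam" and i: "1 \<le> i" and j: "part lam i < j"
  shows "conj_part lam j < i"
proof -
  have "{i' \<in> {1..length lam}. j \<le> part lam i'} \<subseteq> {1..i - 1}"
  proof
    fix i' assume a: "i' \<in> {i' \<in> {1..length lam}. j \<le> part lam i'}"
    have "\<not> i \<le> i'"
    proof
      assume "i \<le> i'"
      then have "part lam i' \<le> part lam i" using part_mono[OF lam i] by blast
      then show False using a j by simp
    qed
    then show "i' \<in> {1..i - 1}" using a by auto
  qed
  then have "card {i' \<in> {1..length lam}. j \<le> part lam i'} \<le> card {1..i - 1}" by (rule card_mono[rotated]) auto
  then show ?thesis unfolding Defs.conj_part_def using i by simp
qed

lemma conj_part_le_len: "conj_part lam j \<le> length lam"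
proof -
  have "card {i' \<in> {1..length lam}. j \<le> part lam i'} \<le> card {1..length lam}" by (rule card_mono) auto
  then show ?thesis unfolding Defs.conj_part_def by simp
qed

lemma conj_part_anti: "j1 \<le> j2 \<Longrightarrow> conj_part lam j2 \<le> conj_part lam j1"
  unfolding Defs.conj_part_def by (rule card_mono) auto

definition hole :: "nat list \<Rightarrow> nat \<Rightarrow> nat \<Rightarrow> nat" where
  "hole lam d j = d + j - conj_part lam j"

definition q0 :: "nat list \<Rightarrow> nat \<Rightarrow> nat \<Rightarrow> nat" where
  "q0 lam d r = part lam (Suc r) + d - r"

lemma q0_dec:
  assumes lam: "is_partition lam" and c: "Suc c < d"
  shows "q0 lam d (Suc c) < q0 lam d c"
proof -
  have "part lam (Suc (Suc c)) \<le> part lam (Suc c)" using part_mono[OF lam, of "Suc c" "Suc (Suc c)"] by simp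
  then show ?thesis unfolding q0_def using c by simp
qed

lemma q0_dec_le:
  assumes lam: "is_partition lam" and "r \<le> r'" "r' < d"
  shows "q0 lam d r' \<le> q0 lam d r"
  using assms(2,3)
proof (induction r')
  case 0 then show ?case by simp
next
  case (Suc r')
  then show ?case using q0_dec[OF lam, of r' d] by (cases "r = Suc r'") auto
qed

lemma q0_lt:
  assumes lam: "is_partition lam" and "r < r'" "r' < d"
  shows "q0 lam d r' < q0 lam d r"
proof -
  have "q0 lam d r' \<le> q0 lam d (Suc r)" using q0_dec_le[OF lam, of "Suc r" r' d] assms by simp
  also have "\<dots> < q0 lam d r" using q0_dec[OF lam, of r d] assms by simp
  finally show ?thesis .
qed

lemma q0_range:
  assumes lam: "is_partition lam" and r: "r < d"
  shows "1 \<le> q0 lam d r" "q0 lam d r \<le> part lam 1 + d"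
proof -
  show "1 \<le> q0 lam d r" unfolding q0_def using r by simp
  have "part lam (Suc r) \<le> part lam 1" using part_mono[OF lam, of 1 "Suc r"] by simp
  then show "q0 lam d r \<le> part lam 1 + d" unfolding q0_def by simp
qed

lemma hole_ne_q0:
  assumes lam: "is_partition lam" and len: "length lam \<le> d" and j: "1 \<le> j" and r: "r < d"
  shows "hole lam d j \<noteq> q0 lam d r"
proof (cases "j \<le> part lam (Suc r)")
  case True
  have "Suc r \<le> conj_part lam j" by (rule conj_part_ge[OF lam _ j True]) simp
  moreover have "conj_part lam j \<le> d" using conj_part_le_len[of lam j] len by simp
  ultimately have "hole lam d j \<le> d + part lam (Suc r) - Suc r" unfolding hole_def using True by simp
  then show ?thesis unfolding q0_def using r by simp
next
  case False
  have "conj_part lam j < Suc r" by (rule conj_part_lt[OF lam _]) (use False in auto)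
  then have "hole lam d j \<ge> d + j - r" unfolding hole_def by simp
  then show ?thesis unfolding q0_def using False r by simp
qed

lemma hole_lt_q0:
  assumes lam: "is_partition lam" and len: "length lam \<le> d" and j: "1 \<le> j" "j \<le> part lam (Suc r)" and r: "r < d"
  shows "hole lam d j < q0 lam d r" "1 \<le> hole lam d j"
proof -
  have "Suc r \<le> conj_part lam j" by (rule conj_part_ge[OF lam _ j]) simp
  moreover have "conj_part lam j \<le> d" using conj_part_le_len[of lam j] len by simp
  ultimately have "hole lam d j \<le> d + part lam (Suc r) - Suc r" unfolding hole_def using j by simp
  then show "hole lam d j < q0 lam d r" unfolding q0_def using r by simp
  show "1 \<le> hole lam d j" unfolding hole_def using \<open>conj_part lam j \<le> d\<close> j by simp
qed

lemma hole_mono: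
  assumes len: "length lam \<le> d" and "j1 < j2"
  shows "hole lam d j1 < hole lam d j2"
proof -
  have "conj_part lam j2 \<le> conj_part lam j1" using conj_part_anti assms(2) by simp
  moreover have "conj_part lam j1 \<le> d" using conj_part_le_len[of lam j1] len by simp
  ultimately show ?thesis unfolding hole_def using assms(2) by simp
qed

lemma holes_decomp:
  assumes lam: "is_partition lam" and len: "length lam \<le> d" and r: "r < d"
  shows "{1..<q0 lam d r} = q0 lam d ` {r<..<d} \<union> hole lam d ` {1..part lam (Suc r)}"
    and "q0 lam d ` {r<..<d} \<inter> hole lam d ` {1..part lam (Suc r)} = {}"
    and "inj_on (q0 lam d) {r<..<d}" and "inj_on (hole lam d) {1..part lam (Suc r)}"
proof -
  show inj1: "inj_on (q0 lam d) {r<..<d}"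
  proof (rule inj_onI)
    fix x y assume "x \<in> {r<..<d}" "y \<in> {r<..<d}" "q0 lam d x = q0 lam d y"
    then show "x = y" using q0_lt[OF lam, of x y d] q0_lt[OF lam, of y x d]
      by (metis greaterThanLessThan_iff less_irrefl nat_neq_iff)
  qed
  show inj2: "inj_on (hole lam d) {1..part lam (Suc r)}"
  proof (rule inj_onI)
    fix x y assume "hole lam d x = hole lam d y"
    then show "x = y" using hole_mono[OF len, of x y] hole_mono[OF len, of y x]
      by (metis less_irrefl nat_neq_iff)
  qed
  show disj: "q0 lam d ` {r<..<d} \<inter> hole lam d ` {1..part lam (Suc r)} = {}"
    using hole_ne_q0[OF lam len] by fastforce
  have sub: "q0 lam d ` {r<..<d} \<union> hole lam d ` {1..part lam (Suc r)} \<subseteq> {1..<q0 lam d r}"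
  proof
    fix t assume "t \<in> q0 lam d ` {r<..<d} \<union> hole lam d ` {1..part lam (Suc r)}"
    then consider (a) r' where "r' \<in> {r<..<d}" "t = q0 lam d r'" | (b) j where "j \<in> {1..part lam (Suc r)}" "t = hole lam d j"
      by blast
    then show "t \<in> {1..<q0 lam d r}"
    proof cases
      case a then show ?thesis using q0_lt[OF lam, of r r' d] q0_range(1)[OF lam, of r' d] by auto
    next
      case b then show ?thesis using hole_lt_q0[OF lam len, of j r] r by auto
    qed
  qed
  have "card (q0 lam d ` {r<..<d} \<union> hole lam d ` {1..part lam (Suc r)}) = card (q0 lam d ` {r<..<d}) + card (hole lam d ` {1..part lam (Suc r)})"
    by (rule card_Un_disjoint) (use disj in auto)
  also have "\<dots> = (d - Suc r) + part lam (Suc r)"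
    using card_image[OF inj1] card_image[OF inj2] by simp
  also have "\<dots> = card {1..<q0 lam d r}" unfolding q0_def using r by simp
  finally have "card (q0 lam d ` {r<..<d} \<union> hole lam d ` {1..part lam (Suc r)}) = card {1..<q0 lam d r}" .
  then show "{1..<q0 lam d r} = q0 lam d ` {r<..<d} \<union> hole lam d ` {1..part lam (Suc r)}"
    using card_subset_eq[OF _ sub] by auto
qed





definition posf :: "nat \<Rightarrow> (nat \<Rightarrow> nat) \<Rightarrow> nat \<Rightarrow> nat" where
  "posf d \<mu> c = \<mu> (Suc c) + d - c"

definition avf :: "(nat \<Rightarrow> 'a::field) \<Rightarrow> nat list \<Rightarrow> nat \<Rightarrow> nat \<Rightarrow> 'a" where
  "avf A lam d r = A (q0 lam d r)"

definition Dm :: "(nat \<Rightarrow> 'a::field) \<Rightarrow> nat list \<Rightarrow> nat \<Rightarrow> (nat \<Rightarrow> nat) \<Rightarrow> 'a" where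
  "Dm A lam d \<mu> = det (DM A (avf A lam d) d (posf d \<mu>))"

definition Rat :: "(nat \<Rightarrow> 'a::field) \<Rightarrow> nat list \<Rightarrow> nat \<Rightarrow> (nat \<Rightarrow> nat) \<Rightarrow> 'a" where
  "Rat A lam d \<nu> = (\<Prod>i=1..d. A (\<nu> i + d - i + 1) / A (part lam i + d - i + 1))"

definition Uf :: "(nat \<Rightarrow> 'a::field) \<Rightarrow> nat list \<Rightarrow> nat \<Rightarrow> (nat \<Rightarrow> nat) \<Rightarrow> 'a" where
  "Uf A lam d \<nu> = 1 / (Rat A lam d \<nu> - 1)"

lemma prod_Suc_reindex: "(\<Prod>i=1..d. f i) = (\<Prod>c<d. f (Suc c))"
  using prod.atLeast1_atMost_eq[of f d] by simp

lemma Suc_diff_helper: "x < d \<Longrightarrow> Suc (a + d - Suc x) = a + d - (x::nat)"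
  by simp

lemma pow_prod:
  fixes a :: "'a::field"
  assumes "a \<noteq> 0" "finite I"
  shows "a ^ card I * (\<Prod>t\<in>I. x t / a - 1) = (\<Prod>t\<in>I. x t - a)"
proof -
  have "a ^ card I = (\<Prod>t\<in>I. a)" by simp
  then have "a ^ card I * (\<Prod>t\<in>I. x t / a - 1) = (\<Prod>t\<in>I. a * (x t / a - 1))" by (simp add: prod.distrib)
  also have "\<dots> = (\<Prod>t\<in>I. x t - a)" using assms(1) by (simp add: algebra_simps)
  finally show ?thesis .
qed

context
  fixes A :: "nat \<Rightarrow> 'a::field" and lam :: "nat list" and d :: nat
  assumes lam: "is_partition lam" and len: "length lam \<le> d"
    and Anz: "\<And>t. 1 \<le> t \<Longrightarrow> t \<le> part lam 1 + d \<Longrightarrow> A t \<noteq> 0"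
    and Ainj: "inj_on A {1..part lam 1 + d}"
begin

lemma av_nz: "r < d \<Longrightarrow> avf A lam d r \<noteq> 0"
  unfolding avf_def using q0_range[OF lam] Anz by simp

lemma posf_props:
  assumes v: "valid lam \<mu>"
  shows "\<And>c. Suc c < d \<Longrightarrow> posf d \<mu> (Suc c) < posf d \<mu> c"
    and "\<And>c. c < d \<Longrightarrow> 1 \<le> posf d \<mu> c"
    and "\<And>c. c < d \<Longrightarrow> posf d \<mu> c \<le> q0 lam d c"
    and "\<And>c. c < d \<Longrightarrow> A (posf d \<mu> c) \<noteq> 0"
proof -
  fix c assume c: "Suc c < d"
  have "\<mu> (Suc (Suc c)) \<le> \<mu> (Suc c)" using v unfolding valid_def by simp
  then show "posf d \<mu> (Suc c) < posf d \<mu> c" unfolding posf_def using c by simp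
next
  fix c assume c: "c < d"
  show "1 \<le> posf d \<mu> c" unfolding posf_def using c by simp
  have le: "posf d \<mu> c \<le> q0 lam d c" unfolding posf_def q0_def using v c unfolding valid_def
    by (metis add_le_mono1 diff_le_mono)
  then show "posf d \<mu> c \<le> q0 lam d c" .
  show "A (posf d \<mu> c) \<noteq> 0"
    using Anz[of "posf d \<mu> c"] le q0_range[OF lam c] c unfolding posf_def by simp
qed

lemma W_eq: "(\<Prod>r<d. avf A lam d r) = (\<Prod>i=1..d. A (part lam i + d - i + 1))"
  unfolding prod_Suc_reindex avf_def q0_def
  by (rule prod.cong) (auto simp: Suc_diff_helper)

lemma w_eq: "(\<Prod>c<d. A (posf d \<mu> c)) = (\<Prod>i=1..d. A (\<mu> i + d - i + 1))"
  unfolding prod_Suc_reindex posf_def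
  by (rule prod.cong) (auto simp: Suc_diff_helper)

lemma Rat_eq: "Rat A lam d \<mu> = (\<Prod>c<d. A (posf d \<mu> c)) / (\<Prod>r<d. avf A lam d r)"
  unfolding Rat_def w_eq W_eq by (simp add: prod_dividef)

lemma Add0_eq:
  assumes v: "valid lam \<mu>"
  shows "{c. c < d \<and> (c = 0 \<or> Suc (posf d \<mu> c) \<noteq> posf d \<mu> (c - 1)) \<and> posf d \<mu> c < q0 lam d c}
       = {c. Suc c \<in> addS lam \<mu>}"
proof (rule Set.set_eqI, rule iffI)
  fix c assume "c \<in> {c. c < d \<and> (c = 0 \<or> Suc (posf d \<mu> c) \<noteq> posf d \<mu> (c - 1)) \<and> posf d \<mu> c < q0 lam d c}"
  then have c: "c < d" and b: "c = 0 \<or> Suc (posf d \<mu> c) \<noteq> posf d \<mu> (c - 1)" and lt: "posf d \<mu> c < q0 lam d c" by auto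
  have lt': "\<mu> (Suc c) < part lam (Suc c)" using lt c unfolding posf_def q0_def by simp
  have "Suc c = 1 \<or> \<mu> (Suc c) < \<mu> (Suc c - 1)"
  proof (cases "c = 0")
    case False
    then have ne: "Suc (posf d \<mu> c) \<noteq> posf d \<mu> (c - 1)" using b by simp
    have "\<mu> (Suc c) \<le> \<mu> c" using v False unfolding valid_def by simp
    moreover have "\<mu> (Suc c) \<noteq> \<mu> c"
    proof
      assume "\<mu> (Suc c) = \<mu> c"
      then have "Suc (posf d \<mu> c) = posf d \<mu> (c - 1)" unfolding posf_def using False c by simp
      then show False using ne by simp
    qed
    ultimately show ?thesis by simp
  qed simp
  then show "c \<in> {c. Suc c \<in> addS lam \<mu>}" unfolding addS_def using lt' by simp
next
  fix c assume "c \<in> {c. Suc c \<in> addS lam \<mu>}"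
  then have a: "\<mu> (Suc c) < part lam (Suc c)" "Suc c = 1 \<or> \<mu> (Suc c) < \<mu> c" unfolding addS_def by auto
  have "Suc c \<le> length lam" using part_pos_iff[OF lam, of "Suc c"] a(1) by simp
  then have c: "c < d" using len by simp
  have "c = 0 \<or> Suc (posf d \<mu> c) \<noteq> posf d \<mu> (c - 1)"
  proof (cases "c = 0")
    case False
    then have "\<mu> (Suc c) < \<mu> c" using a(2) by simp
    then show ?thesis unfolding posf_def using False c by simp
  qed simp
  moreover have "posf d \<mu> c < q0 lam d c" unfolding posf_def q0_def using a(1) c by simp
  ultimately show "c \<in> {c. c < d \<and> (c = 0 \<or> Suc (posf d \<mu> c) \<noteq> posf d \<mu> (c - 1)) \<and> posf d \<mu> c < q0 lam d c}"
    using c by simp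
qed

lemma sum_reindex_addS:
  assumes v: "valid lam \<mu>"
  shows "(\<Sum>S\<in>Pow {c. Suc c \<in> addS lam \<mu>}. det (DM A (avf A lam d) d (shiftp (posf d \<mu>) S)))
       = (\<Sum>S\<in>Pow (addS lam \<mu>). Dm A lam d (plusS \<mu> S))"
proof (rule sum.reindex_bij_witness[where j = "image Suc" and i = "\<lambda>S. {c. Suc c \<in> S}"])
  fix S assume "S \<in> Pow {c. Suc c \<in> addS lam \<mu>}"
  show "{c. Suc c \<in> Suc ` S} = S" by auto
  show "Suc ` S \<in> Pow (addS lam \<mu>)" using \<open>S \<in> _\<close> by auto
  show "Dm A lam d (plusS \<mu> (Suc ` S)) = det (DM A (avf A lam d) d (shiftp (posf d \<mu>) S))"
    unfolding Dm_def
    by (rule arg_cong[where f = det], rule DM_cong) (auto simp: posf_def shiftp_def plusS_def)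
next
  fix S assume S: "S \<in> Pow (addS lam \<mu>)"
  have "0 \<notin> S" using S unfolding addS_def by auto
  then show "Suc ` {c. Suc c \<in> S} = S" by (auto simp: image_iff) (metis not0_implies_Suc)
  show "{c. Suc c \<in> S} \<in> Pow {c. Suc c \<in> addS lam \<mu>}" using S by auto
qed

lemma Dm_rec:
  assumes v: "valid lam \<mu>"
  shows "(\<Sum>S\<in>{S. S \<subseteq> addS lam \<mu> \<and> S \<noteq> {}}. Dm A lam d (plusS \<mu> S)) = (Rat A lam d \<mu> - 1) * Dm A lam d \<mu>"
proof -
  note pp = posf_props[OF v]
  have "(\<Prod>r<d. avf A lam d r) * (\<Sum>S\<in>Pow {c. c < d \<and> (c = 0 \<or> Suc (posf d \<mu> c) \<noteq> posf d \<mu> (c - 1)) \<and> posf d \<mu> c < q0 lam d c}. det (DM A (avf A lam d) d (shiftp (posf d \<mu>) S)))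
       = (\<Prod>c<d. A (posf d \<mu> c)) * det (DM A (avf A lam d) d (posf d \<mu>))"
  proof (rule det_rec)
    show "\<And>r. r < d \<Longrightarrow> avf A lam d r = A (q0 lam d r)" unfolding avf_def by simp
    show "\<And>r. r < d \<Longrightarrow> A (q0 lam d r) \<noteq> 0" using av_nz unfolding avf_def by simp
    show "\<And>r. r < d \<Longrightarrow> 1 \<le> q0 lam d r" using q0_range[OF lam] by simp
    show "\<And>c. Suc c < d \<Longrightarrow> q0 lam d (Suc c) < q0 lam d c" using q0_dec[OF lam] by simp
  qed (use pp in auto)
  then have e: "(\<Prod>r<d. avf A lam d r) * (\<Sum>S\<in>Pow (addS lam \<mu>). Dm A lam d (plusS \<mu> S)) = (\<Prod>c<d. A (posf d \<mu> c)) * Dm A lam d \<mu>"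
    unfolding Add0_eq[OF v] sum_reindex_addS[OF v] Dm_def .
  have W: "(\<Prod>r<d. avf A lam d r) \<noteq> 0" using av_nz by (simp add: prod_zero_iff)
  have "Pow (addS lam \<mu>) = insert {} {S. S \<subseteq> addS lam \<mu> \<and> S \<noteq> {}}" by auto
  then have "(\<Sum>S\<in>Pow (addS lam \<mu>). Dm A lam d (plusS \<mu> S)) = Dm A lam d (plusS \<mu> {}) + (\<Sum>S\<in>{S. S \<subseteq> addS lam \<mu> \<and> S \<noteq> {}}. Dm A lam d (plusS \<mu> S))"
    using addS_finite[OF lam] by (simp add: finite_subset)
  moreover have "plusS \<mu> {} = \<mu>" unfolding plusS_def by simp
  ultimately have "(\<Prod>r<d. avf A lam d r) * (Dm A lam d \<mu> + (\<Sum>S\<in>{S. S \<subseteq> addS lam \<mu> \<and> S \<noteq> {}}. Dm A lam d (plusS \<mu> S))) = (\<Prod>c<d. A (posf d \<mu> c)) * Dm A lam d \<mu>"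
    using e by simp
  then show ?thesis unfolding Rat_eq using W by (simp add: field_simps)
qed

lemma main_ind:
  "valid lam \<mu> \<Longrightarrow> HG lam (\<lambda>\<nu>. Rat A lam d \<nu> - 1 \<noteq> 0) \<mu> \<Longrightarrow> Gsum lam (Uf A lam d) \<mu> * Dm A lam d (part lam) = Dm A lam d \<mu>"
proof (induction \<mu> rule: measure_induct_rule[where f = "\<lambda>\<mu>. card (ysk lam \<mu>)"])
  case (less \<mu>)
  note v = less.prems(1) and H = less.prems(2)
  show ?case
  proof (cases "ysk lam \<mu> = {}")
    case True
    have "\<And>c. c < d \<Longrightarrow> posf d \<mu> c = posf d (part lam) c"
    proof -
      fix c assume "c < d"
      have "\<mu> (Suc c) \<le> part lam (Suc c)" using v unfolding valid_def by simp
      moreover have "\<not> \<mu> (Suc c) < part lam (Suc c)"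
      proof
        assume "\<mu> (Suc c) < part lam (Suc c)"
        then have "(Suc c, part lam (Suc c)) \<in> ysk lam \<mu>" by (simp add: ysk_iff)
        then show False using True by simp
      qed
      ultimately show "posf d \<mu> c = posf d (part lam) c" unfolding posf_def by simp
    qed
    then have "Dm A lam d \<mu> = Dm A lam d (part lam)" unfolding Dm_def
      by (intro arg_cong[where f = det] DM_cong) auto
    then show ?thesis using Gsum_base[OF True, of "Uf A lam d"] by simp
  next
    case False
    let ?SS = "{S. S \<subseteq> addS lam \<mu> \<and> S \<noteq> {}}"
    have R: "Rat A lam d \<mu> - 1 \<noteq> 0" using HG_self[OF lam v False H] by simp
    have "Gsum lam (Uf A lam d) \<mu> * Dm A lam d (part lam) = Uf A lam d \<mu> * (\<Sum>S\<in>?SS. Gsum lam (Uf A lam d) (plusS \<mu> S) * Dm A lam d (part lam))"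
      unfolding Gsum_rec[OF lam v False] by (simp add: sum_distrib_right mult.assoc)
    also have "(\<Sum>S\<in>?SS. Gsum lam (Uf A lam d) (plusS \<mu> S) * Dm A lam d (part lam)) = (\<Sum>S\<in>?SS. Dm A lam d (plusS \<mu> S))"
    proof (rule sum.cong[OF refl])
      fix S assume "S \<in> ?SS"
      then have S: "S \<subseteq> addS lam \<mu>" "S \<noteq> {}" by auto
      show "Gsum lam (Uf A lam d) (plusS \<mu> S) * Dm A lam d (part lam) = Dm A lam d (plusS \<mu> S)"
        by (rule less.IH[OF card_ysk_plusS[OF S] plus_valid[OF v S(1)] HG_plusS[OF lam v S H]])
    qed
    also have "\<dots> = (Rat A lam d \<mu> - 1) * Dm A lam d \<mu>" by (rule Dm_rec[OF v])
    finally show ?thesis using R unfolding Uf_def by simp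
  qed
qed


lemma Dm_zero: "Dm A lam d (\<lambda>_. 0) = (\<Prod>r'<d. \<Prod>r<r'. (avf A lam d r' - avf A lam d r))"
proof -
  have "DM A (avf A lam d) d (posf d (\<lambda>_. 0)) = mat d d (\<lambda>(r,c). \<Prod>t\<in>{1..<d-c}. (A t - avf A lam d r))"
  proof (rule eq_matI)
    fix r c assume "r < dim_row (mat d d (\<lambda>(r,c). \<Prod>t\<in>{1..<d-c}. (A t - avf A lam d r)))"
      "c < dim_col (mat d d (\<lambda>(r,c). \<Prod>t\<in>{1..<d-c}. (A t - avf A lam d r)))"
    then have r: "r < d" and c: "c < d" by auto
    have "card {1..<d - c} = d - 1 - c" by simp
    then have "ent A (avf A lam d) d r c (d - c) = (\<Prod>t\<in>{1..<d-c}. (A t - avf A lam d r))"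
      unfolding ent_def psi_def using pow_prod[OF av_nz[OF r], of "{1..<d - c}" A] by simp
    then show "DM A (avf A lam d) d (posf d (\<lambda>_. 0)) $$ (r, c) = mat d d (\<lambda>(r,c). \<Prod>t\<in>{1..<d-c}. (A t - avf A lam d r)) $$ (r, c)"
      using r c by (simp add: DM_def posf_def)
  qed (auto simp: DM_def)
  then show ?thesis unfolding Dm_def using vandermonde_poly[of d A "avf A lam d"] by simp
qed

lemma Dm_L: "Dm A lam d (part lam) = (\<Prod>r<d. (\<Prod>t\<in>{1..<q0 lam d r}. (A t - avf A lam d r)) / avf A lam d r ^ part lam (Suc r))"
proof -
  have pq: "posf d (part lam) = q0 lam d" unfolding posf_def q0_def by auto
  have "Dm A lam d (part lam) = (\<Prod>r<d. ent A (avf A lam d) d r r (q0 lam d r))"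
    unfolding Dm_def pq
  proof (rule det_DM_diag)
    show "\<And>r. r < d \<Longrightarrow> avf A lam d r = A (q0 lam d r)" unfolding avf_def by simp
    show "\<And>r. r < d \<Longrightarrow> A (q0 lam d r) \<noteq> 0" using av_nz unfolding avf_def by simp
    show "\<And>r. r < d \<Longrightarrow> 1 \<le> q0 lam d r" using q0_range[OF lam] by simp
    show "\<And>c. Suc c < d \<Longrightarrow> q0 lam d (Suc c) < q0 lam d c" using q0_dec[OF lam] by simp
  qed
  also have "\<dots> = (\<Prod>r<d. (\<Prod>t\<in>{1..<q0 lam d r}. (A t - avf A lam d r)) / avf A lam d r ^ part lam (Suc r))"
  proof (rule prod.cong[OF refl])
    fix r assume "r \<in> {..<d}"
    then have r: "r < d" by simp
    let ?a = "avf A lam d r"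
    have a: "?a \<noteq> 0" by (rule av_nz[OF r])
    have card: "card {1..<q0 lam d r} = part lam (Suc r) + (d - 1 - r)" unfolding q0_def using r by simp
    have "?a ^ card {1..<q0 lam d r} * psi A ?a (q0 lam d r) = (\<Prod>t\<in>{1..<q0 lam d r}. (A t - ?a))"
      unfolding psi_def by (rule pow_prod[OF a]) simp
    then have "?a ^ part lam (Suc r) * (?a ^ (d - 1 - r) * psi A ?a (q0 lam d r)) = (\<Prod>t\<in>{1..<q0 lam d r}. (A t - ?a))"
      unfolding card power_add by (simp add: mult.assoc)
    then show "ent A (avf A lam d) d r r (q0 lam d r) = (\<Prod>t\<in>{1..<q0 lam d r}. (A t - ?a)) / ?a ^ part lam (Suc r)"
      unfolding ent_def using a by (simp add: field_simps)
  qed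
  finally show ?thesis .
qed

lemma holes_prod:
  assumes r: "r < d"
  shows "(\<Prod>t\<in>{1..<q0 lam d r}. (A t - avf A lam d r))
       = (\<Prod>r'\<in>{r<..<d}. (avf A lam d r' - avf A lam d r)) * (\<Prod>j\<in>{1..part lam (Suc r)}. (A (hole lam d j) - avf A lam d r))"
proof -
  note hd = holes_decomp[OF lam len r]
  have "(\<Prod>t\<in>{1..<q0 lam d r}. (A t - avf A lam d r))
      = (\<Prod>t\<in>q0 lam d ` {r<..<d}. (A t - avf A lam d r)) * (\<Prod>t\<in>hole lam d ` {1..part lam (Suc r)}. (A t - avf A lam d r))"
    unfolding hd(1) by (rule prod.union_disjoint) (use hd(2) in auto)
  also have "(\<Prod>t\<in>q0 lam d ` {r<..<d}. (A t - avf A lam d r)) = (\<Prod>r'\<in>{r<..<d}. (avf A lam d r' - avf A lam d r))"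
    by (subst prod.reindex[OF hd(3)]) (simp add: avf_def)
  also have "(\<Prod>t\<in>hole lam d ` {1..part lam (Suc r)}. (A t - avf A lam d r)) = (\<Prod>j\<in>{1..part lam (Suc r)}. (A (hole lam d j) - avf A lam d r))"
    by (subst prod.reindex[OF hd(4)]) simp
  finally show ?thesis .
qed

end

lemma V_swap: "(\<Prod>r'<(n::nat). \<Prod>r<r'. f r r') = (\<Prod>r<n. \<Prod>r'\<in>{r<..<n}. f r r')"
proof (induction n)
  case 0 then show ?case by simp
next
  case (Suc n)
  have e0: "{n<..<Suc n} = {}" by auto
  have "(\<Prod>r<Suc n. \<Prod>r'\<in>{r<..<Suc n}. f r r') = (\<Prod>r<n. \<Prod>r'\<in>{r<..<Suc n}. f r r') * (\<Prod>r'\<in>{n<..<Suc n}. f n r')"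
    by simp
  also have "\<dots> = (\<Prod>r<n. \<Prod>r'\<in>{r<..<Suc n}. f r r')" unfolding e0 by simp
  also have "\<dots> = (\<Prod>r<n. (\<Prod>r'\<in>{r<..<n}. f r r') * f r n)"
  proof (rule prod.cong[OF refl])
    fix r assume "r \<in> {..<n}"
    then have "{r<..<Suc n} = insert n {r<..<n}" by auto
    then show "(\<Prod>r'\<in>{r<..<Suc n}. f r r') = (\<Prod>r'\<in>{r<..<n}. f r r') * f r n" by (simp add: mult.commute)
  qed
  also have "\<dots> = (\<Prod>r<n. \<Prod>r'\<in>{r<..<n}. f r r') * (\<Prod>r<n. f r n)" by (simp add: prod.distrib)
  finally show ?case using Suc.IH by simp
qed

context
  fixes A :: "nat \<Rightarrow> 'a::field" and lam :: "nat list" and d :: nat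
  assumes lam: "is_partition lam" and len: "length lam \<le> d"
    and Anz: "\<And>t. 1 \<le> t \<Longrightarrow> t \<le> part lam 1 + d \<Longrightarrow> A t \<noteq> 0"
    and Ainj: "inj_on A {1..part lam 1 + d}"
begin

lemma young_Sigma_d: "young lam = Sigma {1..d} (\<lambda>i. {1..part lam i})"
proof (rule Set.set_eqI)
  fix x :: "nat \<times> nat"
  obtain i j where x: "x = (i, j)" by (cases x)
  have "1 \<le> j \<Longrightarrow> j \<le> part lam i \<Longrightarrow> i \<le> d" using part_pos_iff[OF lam, of i] len by simp
  then show "x \<in> young lam \<longleftrightarrow> x \<in> Sigma {1..d} (\<lambda>i. {1..part lam i})"
    unfolding x young_iff by auto
qed

lemma core_thm:
  assumes H: "\<forall>T\<in>sit lam. \<forall>k\<in>{1..sit_max lam T}. Rat A lam d (\<lambda>i. nu lam T k i) - 1 \<noteq> 0"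
  shows "(\<Sum>T\<in>sit lam. \<Prod>k=1..sit_max lam T. Uf A lam d (\<lambda>i. nu lam T k i))
       = (\<Prod>i=1..d. A (part lam i + d - i + 1) ^ part lam i) * (\<Prod>(i,j)\<in>young lam. 1 / (A (hole lam d j) - A (part lam i + d - i + 1)))"
proof -
  let ?av = "avf A lam d"
  have y0: "ysk lam (\<lambda>_. 0) = young lam" unfolding ysk_def Defs.young_def by auto
  have s0: "sitS lam (\<lambda>_. 0) = sit lam" unfolding sitS_def Defs.sit_def y0 ..
  have m0: "mS lam (\<lambda>_. 0) = sit_max lam" unfolding mS_def Defs.sit_max_def y0 ..
  have v0: "valid lam (\<lambda>_. 0)" unfolding valid_def by simp
  have "Gsum lam (Uf A lam d) (\<lambda>_. 0) * Dm A lam d (part lam) = Dm A lam d (\<lambda>_. 0)"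
  proof (rule main_ind[OF lam len Anz Ainj v0])
    show "HG lam (\<lambda>\<nu>. Rat A lam d \<nu> - 1 \<noteq> 0) (\<lambda>_. 0)"
      unfolding HG_def s0 m0 using H by blast
  qed
  then have G: "(\<Sum>T\<in>sit lam. \<Prod>k=1..sit_max lam T. Uf A lam d (\<lambda>i. nu lam T k i)) * Dm A lam d (part lam) = Dm A lam d (\<lambda>_. 0)"
    unfolding Gsum_def s0 m0 .
  define V where "V = (\<Prod>r<d. \<Prod>r'\<in>{r<..<d}. (?av r' - ?av r))"
  define H where "H = (\<lambda>r. \<Prod>j\<in>{1..part lam (Suc r)}. (A (hole lam d j) - ?av r))"
  have D0: "Dm A lam d (\<lambda>_. 0) = V"
    using Dm_zero[OF lam len Anz Ainj] V_swap[of "\<lambda>r r'. ?av r' - ?av r" d] unfolding V_def by simp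
  have DL: "Dm A lam d (part lam) = V * (\<Prod>r<d. H r / ?av r ^ part lam (Suc r))"
  proof -
    have "Dm A lam d (part lam) = (\<Prod>r<d. (\<Prod>t\<in>{1..<q0 lam d r}. (A t - ?av r)) / ?av r ^ part lam (Suc r))"
      by (rule Dm_L[OF lam len Anz Ainj])
    also have "\<dots> = (\<Prod>r<d. (\<Prod>r'\<in>{r<..<d}. (?av r' - ?av r)) * (H r / ?av r ^ part lam (Suc r)))"
    proof (rule prod.cong[OF refl])
      fix r assume "r \<in> {..<d}"
      then have r: "r < d" by simp
      show "(\<Prod>t\<in>{1..<q0 lam d r}. (A t - ?av r)) / ?av r ^ part lam (Suc r) = (\<Prod>r'\<in>{r<..<d}. (?av r' - ?av r)) * (H r / ?av r ^ part lam (Suc r))"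
        using holes_prod[OF lam len Anz Ainj r] unfolding H_def by simp
    qed
    finally have "Dm A lam d (part lam) = (\<Prod>r<d. (\<Prod>r'\<in>{r<..<d}. (?av r' - ?av r)) * (H r / ?av r ^ part lam (Suc r)))" .
    then show ?thesis unfolding V_def prod.distrib .
  qed
  have avinj: "?av r' \<noteq> ?av r" if "r < r'" "r' < d" for r r'
  proof
    assume "?av r' = ?av r"
    then have "A (q0 lam d r') = A (q0 lam d r)" unfolding avf_def .
    moreover have "q0 lam d r' \<in> {1..part lam 1 + d}" "q0 lam d r \<in> {1..part lam 1 + d}"
      using q0_range[OF lam, of r' d] q0_range[OF lam, of r d] that by auto
    ultimately have "q0 lam d r' = q0 lam d r" using Ainj by (simp add: inj_on_eq_iff)
    then show False using q0_lt[OF lam that] by simp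
  qed
  have Vnz: "V \<noteq> 0" unfolding V_def using avinj by (simp add: prod_zero_iff)
  have Hnz: "H r \<noteq> 0" if r: "r < d" for r
  proof -
    have "A (hole lam d j) - ?av r \<noteq> 0" if j: "j \<in> {1..part lam (Suc r)}" for j
    proof
      assume "A (hole lam d j) - ?av r = 0"
      then have "A (hole lam d j) = A (q0 lam d r)" unfolding avf_def by simp
      moreover have "hole lam d j \<in> {1..part lam 1 + d}" "q0 lam d r \<in> {1..part lam 1 + d}"
        using hole_lt_q0[OF lam len, of j r] q0_range[OF lam r] j r by auto
      ultimately have "hole lam d j = q0 lam d r" using Ainj by (simp add: inj_on_eq_iff)
      then show False using hole_ne_q0[OF lam len, of j r] j r by simp
    qed
    then show ?thesis unfolding H_def by (simp add: prod_zero_iff)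
  qed
  have LHS: "(\<Sum>T\<in>sit lam. \<Prod>k=1..sit_max lam T. Uf A lam d (\<lambda>i. nu lam T k i)) = (\<Prod>r<d. ?av r ^ part lam (Suc r) / H r)"
  proof -
    have nz: "(\<Prod>r<d. H r / ?av r ^ part lam (Suc r)) \<noteq> 0"
      using Hnz av_nz[OF lam len Anz Ainj] by (simp add: prod_zero_iff)
    have "(\<Sum>T\<in>sit lam. \<Prod>k=1..sit_max lam T. Uf A lam d (\<lambda>i. nu lam T k i)) = 1 / (\<Prod>r<d. H r / ?av r ^ part lam (Suc r))"
      using G D0 DL Vnz nz by (simp add: field_simps)
    also have "\<dots> = (\<Prod>r<d. 1 / (H r / ?av r ^ part lam (Suc r)))"
      by (subst prod_dividef) simp
    also have "\<dots> = (\<Prod>r<d. ?av r ^ part lam (Suc r) / H r)"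
      by simp
    finally show ?thesis .
  qed
  have R1: "(\<Prod>i=1..d. A (part lam i + d - i + 1) ^ part lam i) = (\<Prod>r<d. ?av r ^ part lam (Suc r))"
    unfolding prod_Suc_reindex avf_def q0_def by (rule prod.cong) (auto simp: Suc_diff_helper)
  have R2: "(\<Prod>(i,j)\<in>young lam. 1 / (A (hole lam d j) - A (part lam i + d - i + 1))) = (\<Prod>r<d. 1 / H r)"
  proof -
    have "(\<Prod>(i,j)\<in>young lam. 1 / (A (hole lam d j) - A (part lam i + d - i + 1)))
        = (\<Prod>i\<in>{1..d}. \<Prod>j\<in>{1..part lam i}. 1 / (A (hole lam d j) - A (part lam i + d - i + 1)))"
      unfolding young_Sigma_d by (rule prod.Sigma[symmetric]) auto
    also have "\<dots> = (\<Prod>r<d. \<Prod>j\<in>{1..part lam (Suc r)}. 1 / (A (hole lam d j) - A (part lam (Suc r) + d - Suc r + 1)))"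
      by (rule prod_Suc_reindex)
    also have "\<dots> = (\<Prod>r<d. 1 / H r)"
    proof (rule prod.cong[OF refl])
      fix r assume "r \<in> {..<d}"
      then have r: "r < d" by simp
      have "part lam (Suc r) + d - Suc r + 1 = q0 lam d r" unfolding q0_def using r by simp
      then show "(\<Prod>j\<in>{1..part lam (Suc r)}. 1 / (A (hole lam d j) - A (part lam (Suc r) + d - Suc r + 1))) = 1 / H r"
        unfolding H_def avf_def by (simp add: prod_dividef)
    qed
    finally show ?thesis .
  qed
  show ?thesis unfolding LHS R1 R2 by (simp add: prod.distrib[symmetric] divide_inverse)
qed

end






lemma lin_roots_finite:
  fixes c e :: "'a::field"
  assumes "e \<noteq> 0"
  shows "finite {x. c + x * e = 0}"
proof -
  have "[:c, e:] \<noteq> 0" using assms by simp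
  from poly_roots_finite[OF this] show ?thesis by simp
qed

lemma card_young: "card (young lam) = sum_list lam"
proof -
  have "card (young lam) = (\<Sum>i\<in>{1..length lam}. card {1..part lam i})"
    unfolding young_Sigma by (rule card_SigmaI) auto
  also have "\<dots> = (\<Sum>i\<in>{1..length lam}. part lam i)" by simp
  also have "\<dots> = (\<Sum>c<length lam. part lam (Suc c))" using sum.atLeast1_atMost_eq[of "part lam" "length lam"] by simp
  also have "\<dots> = (\<Sum>c<length lam. lam ! c)" by (rule sum.cong) (auto simp: Defs.part_def)
  also have "\<dots> = sum_list lam" by (simp add: sum_list_sum_nth atLeast0LessThan)
  finally show ?thesis .
qed

lemma sit_finite: "finite (sit lam)"
proof -
  have y0: "ysk lam (\<lambda>_. 0) = young lam" unfolding ysk_def Defs.young_def by auto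
  have "sitS lam (\<lambda>_. 0) = sit lam" unfolding sitS_def Defs.sit_def y0 ..
  then show ?thesis using sitS_finite[of lam "\<lambda>_. 0"] by simp
qed

lemma rf_Rat:
  fixes A0 :: "nat \<Rightarrow> 'a::field"
  assumes "\<And>i. i \<in> {1..d} \<Longrightarrow> A0 (part lam i + d - i + 1) \<noteq> 0"
  shows "rf (\<lambda>x. Rat (\<lambda>t. A0 t + x * of_nat t) lam d \<nu>)"
  unfolding Rat_def
  by (rule rf_prod, rule rf_divide[OF rf_lin rf_lin]) (use assms in simp)

theorem theorem4p2:
  fixes d n :: nat and lam :: "nat list" and \<beta> :: "'a::field_char_0" and y :: "nat \<Rightarrow> 'a"
  assumes "d \<ge> 1" and "is_partition lam" and "sum_list lam = n" and "length lam \<le> d"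
    and "\<beta> \<noteq> 0"
    and "\<forall>i\<in>{1..d}. 1 + \<beta> * y (part lam i + d - i + 1) \<noteq> 0"
    and "\<forall>(i, j)\<in>young lam. y (d + j - conj_part lam j) \<noteq> y (part lam i + d - i + 1)"
    and "\<forall>T\<in>sit lam. \<forall>k\<in>{1..sit_max lam T}.
           (\<Prod>i=1..d. (1 + \<beta> * y (nu lam T k i + d - i + 1)) / (1 + \<beta> * y (part lam i + d - i + 1))) - 1 \<noteq> 0"
  shows "(\<Sum>T\<in>sit lam. \<Prod>k=1..sit_max lam T.
            1 / ((\<Prod>i=1..d. (1 + \<beta> * y (nu lam T k i + d - i + 1)) / (1 + \<beta> * y (part lam i + d - i + 1))) - 1))
         = 1 / \<beta> ^ n * (\<Prod>i=1..d. (1 + \<beta> * y (part lam i + d - i + 1)) ^ part lam i)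
             * (\<Prod>(i, j)\<in>young lam. 1 / (y (d + j - conj_part lam j) - y (part lam i + d - i + 1)))"
proof -
  note lam = assms(2) and len = assms(4) and \<beta> = assms(5)
  define A0 where "A0 = (\<lambda>t. 1 + \<beta> * y t)"
  define Ax where "Ax = (\<lambda>x t. A0 t + x * (of_nat t :: 'a))"
  define N where "N = part lam 1 + d"
  define Q where "Q = (\<lambda>i. part lam i + d - i + 1)"
  define L where "L = (\<lambda>x. \<Sum>T\<in>sit lam. \<Prod>k=1..sit_max lam T. Uf (Ax x) lam d (\<lambda>i. nu lam T k i))"
  define R where "R = (\<lambda>x. (\<Prod>i=1..d. Ax x (Q i) ^ part lam i) * (\<Prod>c\<in>young lam. 1 / (Ax x (hole lam d (snd c)) - Ax x (Q (fst c)))))"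
  have AQ: "\<And>i. i \<in> {1..d} \<Longrightarrow> A0 (part lam i + d - i + 1) \<noteq> 0" using assms(6) unfolding A0_def by simp
  have Ax0: "Ax 0 = A0" unfolding Ax_def by simp
  have RatAx: "rf (\<lambda>x. Rat (Ax x) lam d \<nu>)" for \<nu> unfolding Ax_def by (rule rf_Rat) (rule AQ)
  have H8: "Rat A0 lam d (\<lambda>i. nu lam T k i) - 1 \<noteq> 0" if "T \<in> sit lam" "k \<in> {1..sit_max lam T}" for T k
    using assms(8) that unfolding Rat_def A0_def by simp
  have rfL: "rf L"
    unfolding L_def
  proof (rule rf_sum, rule rf_prod)
    fix T k assume T: "T \<in> sit lam" and k: "k \<in> {1..sit_max lam T}"
    show "rf (\<lambda>x. Uf (Ax x) lam d (\<lambda>i. nu lam T k i))"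
      unfolding Uf_def
      by (rule rf_inverse[OF rf_minus[OF RatAx rf_const]]) (use H8[OF T k] Ax0 in simp)
  qed
  have hole_ne: "A0 (hole lam d j) - A0 (Q i) \<noteq> 0" if "(i, j) \<in> young lam" for i j
    using assms(7) that \<beta> unfolding A0_def Q_def hole_def by auto
  have rfR: "rf R"
    unfolding R_def
  proof (rule rf_mult)
    show "rf (\<lambda>x. \<Prod>i = 1..d. Ax x (Q i) ^ part lam i)"
      unfolding Ax_def by (intro rf_prod rf_power rf_lin)
    show "rf (\<lambda>x. \<Prod>c\<in>young lam. 1 / (Ax x (hole lam d (snd c)) - Ax x (Q (fst c))))"
    proof (rule rf_prod)
      fix c assume c: "c \<in> young lam"
      obtain i j where cij: "c = (i, j)" by (cases c)
      show "rf (\<lambda>x. 1 / (Ax x (hole lam d (snd c)) - Ax x (Q (fst c))))"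
        by (rule rf_inverse[OF rf_minus]) (use hole_ne[of i j] c cij Ax0 in \<open>simp_all add: Ax_def rf_lin\<close>)
    qed
  qed
  define bad1 where "bad1 = (\<Union>t\<in>{1..N}. {x. A0 t + x * of_nat t = 0})"
  define bad2 where "bad2 = (\<Union>s\<in>{1..N}. \<Union>t\<in>{1..N} - {s}. {x. (A0 s - A0 t) + x * (of_nat s - of_nat t) = 0})"
  define bad3 where "bad3 = (\<Union>T\<in>sit lam. \<Union>k\<in>{1..sit_max lam T}. {x. Rat (Ax x) lam d (\<lambda>i. nu lam T k i) - 1 = 0})"
  have fin1: "finite bad1" unfolding bad1_def by (intro finite_UN_I finite_atLeastAtMost lin_roots_finite) auto
  have fin2: "finite bad2" unfolding bad2_def by (intro finite_UN_I finite_Diff finite_atLeastAtMost lin_roots_finite) auto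
  have fin3: "finite bad3" unfolding bad3_def
  proof (intro finite_UN_I sit_finite finite_atLeastAtMost)
    fix T k assume T: "T \<in> sit lam" and k: "k \<in> {1..sit_max lam T}"
    show "finite {x. Rat (Ax x) lam d (\<lambda>i. nu lam T k i) - 1 = 0}"
      by (rule rf_zeros_finite[OF rf_minus[OF RatAx rf_const]]) (use H8[OF T k] Ax0 in simp)
  qed
  have good: "L x = R x" if x: "x \<notin> bad1 \<union> bad2 \<union> bad3" for x
  proof -
    have Anz: "\<And>t. 1 \<le> t \<Longrightarrow> t \<le> part lam 1 + d \<Longrightarrow> Ax x t \<noteq> 0"
      using x unfolding bad1_def N_def Ax_def by auto
    have Ainj: "inj_on (Ax x) {1..part lam 1 + d}"
    proof (rule inj_onI)
      fix s t assume s: "s \<in> {1..part lam 1 + d}" and t: "t \<in> {1..part lam 1 + d}" and e: "Ax x s = Ax x t"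
      show "s = t"
      proof (rule ccontr)
        assume "s \<noteq> t"
        moreover have "(A0 s - A0 t) + x * (of_nat s - of_nat t) = 0" using e unfolding Ax_def by (simp add: algebra_simps)
        ultimately have "x \<in> bad2" using s t unfolding bad2_def N_def by blast
        then show False using x by simp
      qed
    qed
    have H: "\<forall>T\<in>sit lam. \<forall>k\<in>{1..sit_max lam T}. Rat (Ax x) lam d (\<lambda>i. nu lam T k i) - 1 \<noteq> 0"
      using x unfolding bad3_def by auto
    have "L x = (\<Prod>i=1..d. Ax x (part lam i + d - i + 1) ^ part lam i) * (\<Prod>(i,j)\<in>young lam. 1 / (Ax x (hole lam d j) - Ax x (part lam i + d - i + 1)))"
      unfolding L_def by (rule core_thm[OF lam len Anz Ainj H])
    also have "\<dots> = R x" unfolding R_def Q_def by (simp add: case_prod_beta)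
    finally show ?thesis .
  qed
  have "finite {x. L x \<noteq> R x}"
    using finite_subset[of "{x. L x \<noteq> R x}" "bad1 \<union> bad2 \<union> bad3"] good fin1 fin2 fin3 by blast
  then have LR: "L 0 = R 0" by (rule rf_eq[OF rfL rfR])
  have L0: "L 0 = (\<Sum>T\<in>sit lam. \<Prod>k=1..sit_max lam T.
            1 / ((\<Prod>i=1..d. (1 + \<beta> * y (nu lam T k i + d - i + 1)) / (1 + \<beta> * y (part lam i + d - i + 1))) - 1))"
    unfolding L_def Ax0 Uf_def Rat_def A0_def ..
  have R0: "R 0 = 1 / \<beta> ^ n * (\<Prod>i=1..d. (1 + \<beta> * y (part lam i + d - i + 1)) ^ part lam i)
             * (\<Prod>(i, j)\<in>young lam. 1 / (y (d + j - conj_part lam j) - y (part lam i + d - i + 1)))"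
  proof -
    have "(\<Prod>c\<in>young lam. 1 / (A0 (hole lam d (snd c)) - A0 (Q (fst c))))
        = (\<Prod>c\<in>young lam. (1 / \<beta>) * (1 / (y (d + snd c - conj_part lam (snd c)) - y (part lam (fst c) + d - fst c + 1))))"
      by (rule prod.cong[OF refl]) (use \<beta> in \<open>simp add: A0_def Q_def hole_def algebra_simps\<close>)
    also have "\<dots> = (1 / \<beta>) ^ card (young lam) * (\<Prod>c\<in>young lam. 1 / (y (d + snd c - conj_part lam (snd c)) - y (part lam (fst c) + d - fst c + 1)))"
      by (simp only: prod.distrib prod_constant)
    also have "\<dots> = 1 / \<beta> ^ n * (\<Prod>(i, j)\<in>young lam. 1 / (y (d + j - conj_part lam j) - y (part lam i + d - i + 1)))"
      unfolding card_young assms(3) by (simp add: case_prod_beta power_one_over)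
    finally have "(\<Prod>c\<in>young lam. 1 / (A0 (hole lam d (snd c)) - A0 (Q (fst c)))) = 1 / \<beta> ^ n * (\<Prod>(i, j)\<in>young lam. 1 / (y (d + j - conj_part lam j) - y (part lam i + d - i + 1)))" .
    then show ?thesis unfolding R_def Ax0 by (simp add: A0_def Q_def mult_ac)
  qed
  show ?thesis using LR L0 R0 by simp
qed


end
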